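(* In the setting of the context, let $\hat V\in C^{0,\alpha}(\Sigma,\mathbb{R})$ with $\hat V(x)>0$ for all $x$. Then there is a unique $c\in\mathbb{R}$ with $P(-c\hat V)=0$. Moreover $c>0$ if $P(0)>0$ and $c<0$ if $P(0)<0$.
   Context: $\Sigma=\{1,\dots,t\}^{\mathbb{N}}$ with the metric $d_\gamma(x,y)=\inf\{\gamma^{k+1}:x_j=y_j,\ j\le k\}$ (fixed $\gamma\in(0,1)$), $\sigma$ the shift, $ix=(i,x_0,x_1,\dots)$. $\psi_1,\dots,\psi_t$ are affine bijections of $\mathbb{R}^d$ with $\max\mathrm{Lip}(\psi_i)<1$, $q\in\{1,\dots,d\}$, $(D\psi_i)_*$ the pull-back on $\Lambda^q(\mathbb{R}^d)$, $M^q$ the self-adjoint operators on $\Lambda^q$, $\Psi_i(A)={}^t(D\psi_i)_*A(D\psi_i)_*$. Assume $(ND_q)$: there is $\gamma'>0$ such that for all $c,e\in\Lambda^q$ some $i$ has $|((D\psi_i)_*c,e)|\ge\gamma'\|c\|\|e\|$. For $W\in C^{0,\alpha}(\Sigma,\mathbb{R})$ the Ruelle operator $(\mathcal{L}_WA)(x)=\sum_ie^{W(ix)}\Psi_i(A(ix))$ on $C(\Sigma,M^q)$ has a unique eigenvalue $\beta_W>0$ admitting an eigenfunction in $C(\Sigma,M^q)$ positive definite at every point; the pressure is $P(W)=\log\beta_W$. *)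

theory Defs
  imports "HOL-Analysis.Analysis"
begin

text \<open>Symbolic space: alphabet {0..<t} (standing for {1..t}); points are sequences.\<close>
definition Sigma_sp :: "nat \<Rightarrow> (nat \<Rightarrow> nat) set" where
  "Sigma_sp t = {x. \<forall>n. x n < t}"

text \<open>d_gamma(x,y) = gamma^(k+1), k+1 = first index of disagreement.\<close>
definition dgam :: "real \<Rightarrow> (nat \<Rightarrow> nat) \<Rightarrow> (nat \<Rightarrow> nat) \<Rightarrow> real" where
  "dgam \<gamma> x y = (if x = y then 0 else \<gamma> ^ (LEAST n. x n \<noteq> y n))"

definition scons :: "nat \<Rightarrow> (nat \<Rightarrow> nat) \<Rightarrow> (nat \<Rightarrow> nat)" where
  "scons i x = case_nat i x"

definition holder :: "nat \<Rightarrow> real \<Rightarrow> real \<Rightarrow> ((nat \<Rightarrow> nat) \<Rightarrow> real) \<Rightarrow> bool" where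
  "holder t \<gamma> \<alpha> W \<longleftrightarrow> (\<exists>C. \<forall>x\<in>Sigma_sp t. \<forall>y\<in>Sigma_sp t.
      \<bar>W x - W y\<bar> \<le> C * dgam \<gamma> x y powr \<alpha>)"

text \<open>Lambda^q(R^d): coefficient functions on the basis dx_I, I a q-subset of the
  (linearly ordered) coordinate index type; only values on qidx q matter.\<close>
definition qidx :: "nat \<Rightarrow> 'n::{finite,linorder} set set" where
  "qidx q = {I. card I = q}"

definition ipq :: "nat \<Rightarrow> ('n::{finite,linorder} set \<Rightarrow> real) \<Rightarrow> ('n::{finite,linorder} set \<Rightarrow> real) \<Rightarrow> real" where
  "ipq q c e = (\<Sum>I\<in>qidx q. c I * e I)"

definition normq :: "nat \<Rightarrow> ('n::{finite,linorder} set \<Rightarrow> real) \<Rightarrow> real" where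
  "normq q c = sqrt (ipq q c c)"

definition minor :: "real^('n::{finite,linorder})^'n::{finite,linorder} \<Rightarrow> nat \<Rightarrow> 'n::{finite,linorder} set \<Rightarrow> 'n::{finite,linorder} set \<Rightarrow> real" where
  "minor L q J K = (\<Sum>p\<in>{p. p permutes {..<q}}. of_int (sign p) *
      (\<Prod>k<q. L $ (sorted_list_of_set J ! k) $ (sorted_list_of_set K ! p k)))"

text \<open>pull-back L_* on Lambda^q: L^*(dx_J) = sum_K minor L J K dx_K\<close>
definition pullback :: "real^('n::{finite,linorder})^'n::{finite,linorder} \<Rightarrow> nat \<Rightarrow> ('n::{finite,linorder} set \<Rightarrow> real) \<Rightarrow> ('n::{finite,linorder} set \<Rightarrow> real)" where
  "pullback L q c = (\<lambda>K. \<Sum>J\<in>qidx q. minor L q J K * c J)"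

text \<open>Psi(A) = ^t(L_*) A (L_*), matrix of L_* has (K,J)-entry minor L J K\<close>
definition Psi_op :: "real^('n::{finite,linorder})^'n::{finite,linorder} \<Rightarrow> nat \<Rightarrow> ('n::{finite,linorder} set \<Rightarrow> 'n::{finite,linorder} set \<Rightarrow> real)
    \<Rightarrow> ('n::{finite,linorder} set \<Rightarrow> 'n::{finite,linorder} set \<Rightarrow> real)" where
  "Psi_op L q A = (\<lambda>K K'. \<Sum>J\<in>qidx q. \<Sum>J'\<in>qidx q. minor L q K J * A J J' * minor L q K' J')"

text \<open>M^q: self-adjoint operators on Lambda^q (as symmetric matrices w.r.t. the
  orthonormal basis dx_I, vanishing outside qidx q).\<close>
definition Mq :: "nat \<Rightarrow> ('n::{finite,linorder} set \<Rightarrow> 'n::{finite,linorder} set \<Rightarrow> real) set" where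
  "Mq q = {A. (\<forall>I J. A I J = A J I) \<and> (\<forall>I J. I \<notin> qidx q \<or> J \<notin> qidx q \<longrightarrow> A I J = 0)}"

definition posdef :: "nat \<Rightarrow> ('n::{finite,linorder} set \<Rightarrow> 'n::{finite,linorder} set \<Rightarrow> real) \<Rightarrow> bool" where
  "posdef q B \<longleftrightarrow> (\<forall>c. (\<exists>I\<in>qidx q. c I \<noteq> 0) \<longrightarrow>
      (\<Sum>I\<in>qidx q. \<Sum>J\<in>qidx q. c I * B I J * c J) > 0)"

definition contM :: "nat \<Rightarrow> real \<Rightarrow> nat \<Rightarrow> ((nat \<Rightarrow> nat) \<Rightarrow> ('n::{finite,linorder} set \<Rightarrow> 'n::{finite,linorder} set \<Rightarrow> real)) \<Rightarrow> bool" where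
  "contM t \<gamma> q A \<longleftrightarrow> (\<forall>x\<in>Sigma_sp t. A x \<in> Mq q) \<and>
     (\<forall>x\<in>Sigma_sp t. \<forall>\<epsilon>>0. \<exists>\<delta>>0. \<forall>y\<in>Sigma_sp t. dgam \<gamma> x y < \<delta> \<longrightarrow>
        (\<forall>I J. \<bar>A y I J - A x I J\<bar> < \<epsilon>))"

definition Dlin :: "(real^('n::{finite,linorder}) \<Rightarrow> real^('n::{finite,linorder})) \<Rightarrow> real^('n::{finite,linorder})^'n::{finite,linorder}" where
  "Dlin \<psi> = matrix (\<lambda>x. \<psi> x - \<psi> 0)"

definition ruelle :: "nat \<Rightarrow> (nat \<Rightarrow> real^('n::{finite,linorder}) \<Rightarrow> real^('n::{finite,linorder})) \<Rightarrow> nat \<Rightarrow> ((nat \<Rightarrow> nat) \<Rightarrow> real)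
    \<Rightarrow> ((nat \<Rightarrow> nat) \<Rightarrow> ('n::{finite,linorder} set \<Rightarrow> 'n::{finite,linorder} set \<Rightarrow> real))
    \<Rightarrow> (nat \<Rightarrow> nat) \<Rightarrow> ('n::{finite,linorder} set \<Rightarrow> 'n::{finite,linorder} set \<Rightarrow> real)" where
  "ruelle t \<psi> q W A x = (\<lambda>K K'. \<Sum>i<t. exp (W (scons i x)) * Psi_op (Dlin (\<psi> i)) q (A (scons i x)) K K')"

definition betaW :: "nat \<Rightarrow> real \<Rightarrow> (nat \<Rightarrow> real^('n::{finite,linorder}) \<Rightarrow> real^('n::{finite,linorder})) \<Rightarrow> nat \<Rightarrow> ((nat \<Rightarrow> nat) \<Rightarrow> real) \<Rightarrow> real" where
  "betaW t \<gamma> \<psi> q W = (THE \<beta>. \<beta> > 0 \<and> (\<exists>A::(nat \<Rightarrow> nat) \<Rightarrow> ('n::{finite,linorder} set \<Rightarrow> 'n::{finite,linorder} set \<Rightarrow> real).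
      contM t \<gamma> q A \<and> (\<forall>x\<in>Sigma_sp t. posdef q (A x)) \<and>
      (\<forall>x\<in>Sigma_sp t. \<forall>K\<in>qidx q. \<forall>K'\<in>qidx q. ruelle t \<psi> q W A x K K' = \<beta> * A x K K')))"

definition pressure :: "nat \<Rightarrow> real \<Rightarrow> (nat \<Rightarrow> real^('n::{finite,linorder}) \<Rightarrow> real^('n::{finite,linorder})) \<Rightarrow> nat \<Rightarrow> ((nat \<Rightarrow> nat) \<Rightarrow> real) \<Rightarrow> real" where
  "pressure t \<gamma> \<psi> q W = ln (betaW t \<gamma> \<psi> q W)"

end

theory Submission
  imports Defs "HOL-Analysis.Analysis"
begin


definition Qf :: "'a set \<Rightarrow> ('a \<Rightarrow> 'a \<Rightarrow> real) \<Rightarrow> ('a \<Rightarrow> real) \<Rightarrow> real" where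
  "Qf S P c = (\<Sum>I\<in>S. \<Sum>J\<in>S. c I * P I J * c J)"
definition Bf :: "'a set \<Rightarrow> ('a \<Rightarrow> 'a \<Rightarrow> real) \<Rightarrow> ('a \<Rightarrow> real) \<Rightarrow> ('a \<Rightarrow> real) \<Rightarrow> real" where
  "Bf S P c e = (\<Sum>I\<in>S. \<Sum>J\<in>S. c I * P I J * e J)"
definition nsq :: "'a set \<Rightarrow> ('a \<Rightarrow> real) \<Rightarrow> real" where
  "nsq S c = (\<Sum>I\<in>S. (c I)^2)"
definition trq :: "'a set \<Rightarrow> ('a \<Rightarrow> 'a \<Rightarrow> real) \<Rightarrow> real" where
  "trq S P = (\<Sum>I\<in>S. P I I)"
definition ev :: "'a \<Rightarrow> 'a \<Rightarrow> real" where
  "ev I = (\<lambda>J. if J = I then 1 else 0)"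
definition symm :: "'a set \<Rightarrow> ('a \<Rightarrow> 'a \<Rightarrow> real) \<Rightarrow> bool" where
  "symm S P \<longleftrightarrow> (\<forall>I\<in>S. \<forall>J\<in>S. P I J = P J I)"
definition psd :: "'a set \<Rightarrow> ('a \<Rightarrow> 'a \<Rightarrow> real) \<Rightarrow> bool" where
  "psd S P \<longleftrightarrow> (\<forall>c. 0 \<le> Qf S P c)"

lemma Qf_Bf: "Qf S P c = Bf S P c c" by (simp add: Qf_def Bf_def)

lemma nsq_nonneg: "0 \<le> nsq S c" by (simp add: nsq_def sum_nonneg)

lemma Bf_sym: assumes "symm S P" shows "Bf S P c e = Bf S P e c"
proof -
  have "Bf S P c e = (\<Sum>J\<in>S. \<Sum>I\<in>S. c I * P I J * e J)" unfolding Bf_def by (rule sum.swap)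
  also have "\<dots> = Bf S P e c" unfolding Bf_def
    using assms unfolding symm_def by (intro sum.cong refl) (auto simp: mult_ac)
  finally show ?thesis .
qed

lemma Bf_add_left: "Bf S P (\<lambda>I. c I + d I) e = Bf S P c e + Bf S P d e"
  by (simp add: Bf_def algebra_simps sum.distrib)
lemma Bf_add_right: "Bf S P c (\<lambda>I. d I + e I) = Bf S P c d + Bf S P c e"
  by (simp add: Bf_def algebra_simps sum.distrib)
lemma Bf_scale_left: "Bf S P (\<lambda>I. a * c I) e = a * Bf S P c e"
  by (simp add: Bf_def algebra_simps sum_distrib_left)
lemma Bf_scale_right: "Bf S P c (\<lambda>I. a * e I) = a * Bf S P c e"
  by (simp add: Bf_def algebra_simps sum_distrib_left)

lemma Qf_comb:
  assumes "symm S P"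
  shows "Qf S P (\<lambda>I. c I + s * e I) = Qf S P c + 2 * s * Bf S P c e + s^2 * Qf S P e"
proof -
  have "Qf S P (\<lambda>I. c I + s * e I) = Bf S P c c + s * Bf S P c e + s * (Bf S P e c + s * Bf S P e e)"
    unfolding Qf_Bf by (simp add: Bf_add_left Bf_add_right Bf_scale_left Bf_scale_right algebra_simps)
  thus ?thesis using Bf_sym[OF assms, of e c] by (simp add: Qf_Bf power2_eq_square algebra_simps)
qed

lemma CS_psd:
  assumes "symm S P" "psd S P"
  shows "(Bf S P c e)^2 \<le> Qf S P c * Qf S P e"
proof -
  have pos: "0 \<le> Qf S P c + 2 * s * Bf S P c e + s^2 * Qf S P e" for s
    using assms(2) Qf_comb[OF assms(1), of c s e] unfolding psd_def by metis
  have qc: "0 \<le> Qf S P c" "0 \<le> Qf S P e" using assms(2) unfolding psd_def by auto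
  show ?thesis
  proof (cases "Qf S P e = 0")
    case True
    have "Bf S P c e = 0"
    proof (rule ccontr)
      assume nz: "Bf S P c e \<noteq> 0"
      define s where "s = - (Qf S P c + 1) / (2 * Bf S P c e)"
      have "2 * s * Bf S P c e = - (Qf S P c + 1)" using nz by (simp add: s_def field_simps)
      thus False using pos[of s] True by simp
    qed
    thus ?thesis using qc by simp
  next
    case False
    hence ep: "Qf S P e > 0" using qc by simp
    define s where "s = - Bf S P c e / Qf S P e"
    have "0 \<le> Qf S P c + 2 * s * Bf S P c e + s^2 * Qf S P e" by (rule pos)
    also have "\<dots> = Qf S P c - (Bf S P c e)^2 / Qf S P e"
      using ep by (simp add: s_def field_simps power2_eq_square)
    finally show ?thesis using ep by (simp add: field_simps)
  qed
qed

lemma sum_ev: "finite S \<Longrightarrow> I \<in> S \<Longrightarrow> (\<Sum>J\<in>S. ev I J * f J) = f I"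
proof -
  assume a: "finite S" "I \<in> S"
  have "(\<Sum>J\<in>S. ev I J * f J) = (\<Sum>J\<in>S. if J = I then f J else 0)"
    by (intro sum.cong) (auto simp: ev_def)
  thus ?thesis using a by (simp add: sum.delta)
qed
lemma sum_ev': "finite S \<Longrightarrow> I \<in> S \<Longrightarrow> (\<Sum>J\<in>S. f J * ev I J) = f I"
  using sum_ev[of S I f] by (simp add: mult.commute)

lemma Bf_ev: "finite S \<Longrightarrow> I \<in> S \<Longrightarrow> J \<in> S \<Longrightarrow> Bf S P (ev I) (ev J) = P I J"
proof -
  assume a: "finite S" "I \<in> S" "J \<in> S"
  have "Bf S P (ev I) (ev J) = (\<Sum>K\<in>S. ev I K * (\<Sum>L\<in>S. P K L * ev J L))"
    unfolding Bf_def by (simp add: sum_distrib_left mult_ac)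
  also have "\<dots> = (\<Sum>L\<in>S. P I L * ev J L)" using a by (simp add: sum_ev)
  also have "\<dots> = P I J" using a by (simp add: sum_ev')
  finally show ?thesis .
qed

lemma Qf_ev: "finite S \<Longrightarrow> I \<in> S \<Longrightarrow> Qf S P (ev I) = P I I"
  by (simp add: Qf_Bf Bf_ev)

lemma psd_diag: "psd S P \<Longrightarrow> finite S \<Longrightarrow> I \<in> S \<Longrightarrow> 0 \<le> P I I"
  using Qf_ev unfolding psd_def by metis

lemma entry_bound2:
  assumes "finite S" "symm S P" "psd S P" "I \<in> S" "J \<in> S"
  shows "2 * \<bar>P I J\<bar> \<le> P I I + P J J"
proof -
  have "0 \<le> Qf S P (\<lambda>K. ev I K + s * ev J K)" for s using assms(3) unfolding psd_def by blast
  hence "0 \<le> P I I + 2 * s * P I J + s^2 * P J J" for s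
    using assms by (simp add: Qf_comb Qf_ev Bf_ev)
  from this[of 1] this[of "-1"] show ?thesis by (simp add: abs_le_iff)
qed

lemma tr_nonneg: "finite S \<Longrightarrow> psd S P \<Longrightarrow> 0 \<le> trq S P"
  unfolding trq_def by (intro sum_nonneg) (auto intro: psd_diag)

lemma diag_le_tr: "finite S \<Longrightarrow> psd S P \<Longrightarrow> I \<in> S \<Longrightarrow> P I I \<le> trq S P"
  unfolding trq_def by (rule member_le_sum) (auto intro: psd_diag)

lemma entry_le_tr:
  assumes "finite S" "symm S P" "psd S P" "I \<in> S" "J \<in> S"
  shows "\<bar>P I J\<bar> \<le> trq S P"
proof (cases "I = J")
  case True thus ?thesis using assms psd_diag[of S P I] diag_le_tr[of S P I] by simp
next
  case False
  have "P I I + P J J = (\<Sum>K\<in>{I,J}. P K K)" using False by simp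
  also have "\<dots> \<le> trq S P" unfolding trq_def
    by (rule sum_mono2) (use assms in \<open>auto intro: psd_diag\<close>)
  finally show ?thesis using entry_bound2[OF assms] by linarith
qed

lemma sumabs_sq: "finite S \<Longrightarrow> (\<Sum>I\<in>S. \<bar>c I\<bar>)^2 \<le> real (card S) * nsq S c"
proof -
  assume f: "finite S"
  have "(\<Sum>I\<in>S. \<bar>c I\<bar>)^2 = (\<Sum>I\<in>S. \<Sum>J\<in>S. \<bar>c I\<bar> * \<bar>c J\<bar>)"
    by (simp add: power2_eq_square sum_product)
  also have "\<dots> \<le> (\<Sum>I\<in>S. \<Sum>J\<in>S. ((c I)^2 + (c J)^2) / 2)"
  proof (intro sum_mono)
    fix I J show "\<bar>c I\<bar> * \<bar>c J\<bar> \<le> ((c I)^2 + (c J)^2) / 2"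
      using sum_squares_bound[of "\<bar>c I\<bar>" "\<bar>c J\<bar>"] by (simp add: power2_abs) 
  qed
  also have "\<dots> = real (card S) * nsq S c"
    apply (simp add: nsq_def sum.distrib sum_divide_distrib[symmetric] sum_distrib_left sum.swap[of "\<lambda>I J. (c J)^2"] )
    apply (simp add: sum_distrib_left mult_ac)
    done
  finally show ?thesis .
qed

lemma Qf_diff:
  assumes "\<forall>I\<in>S. \<forall>J\<in>S. \<bar>P I J - P' I J\<bar> \<le> e"
  shows "\<bar>Qf S P c - Qf S P' c\<bar> \<le> e * (\<Sum>I\<in>S. \<bar>c I\<bar>)^2"
proof -
  have "\<bar>Qf S P c - Qf S P' c\<bar> = \<bar>\<Sum>I\<in>S. \<Sum>J\<in>S. c I * (P I J - P' I J) * c J\<bar>"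
    unfolding Qf_def by (simp add: sum_subtractf[symmetric] algebra_simps)
  also have "\<dots> \<le> (\<Sum>I\<in>S. \<Sum>J\<in>S. \<bar>c I * (P I J - P' I J) * c J\<bar>)"
    by (rule order_trans[OF sum_abs]) (intro sum_mono sum_abs)
  also have "\<dots> \<le> (\<Sum>I\<in>S. \<Sum>J\<in>S. e * (\<bar>c I\<bar> * \<bar>c J\<bar>))"
  proof (intro sum_mono)
    fix I J assume IJ: "I \<in> S" "J \<in> S"
    have "\<bar>c I * (P I J - P' I J) * c J\<bar> = \<bar>P I J - P' I J\<bar> * (\<bar>c I\<bar> * \<bar>c J\<bar>)"
      by (simp add: abs_mult)
    also have "\<dots> \<le> e * (\<bar>c I\<bar> * \<bar>c J\<bar>)"
      using assms IJ by (intro mult_right_mono) auto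
    finally show "\<bar>c I * (P I J - P' I J) * c J\<bar> \<le> e * (\<bar>c I\<bar> * \<bar>c J\<bar>)" .
  qed
  also have "\<dots> = e * (\<Sum>I\<in>S. \<bar>c I\<bar>)^2"
    by (simp add: power2_eq_square sum_product sum_distrib_left sum_distrib_right mult_ac)
  finally show ?thesis .
qed


lemma Qf_le_tr:
  assumes "finite S" "symm S P" "psd S P"
  shows "Qf S P c \<le> real (card S) * trq S P * nsq S c"
proof -
  have "\<bar>Qf S P c - Qf S (\<lambda>I J. 0) c\<bar> \<le> trq S P * (\<Sum>I\<in>S. \<bar>c I\<bar>)^2"
    using entry_le_tr[OF assms] by (intro Qf_diff) auto
  moreover have "Qf S (\<lambda>I J. 0) c = 0" by (simp add: Qf_def)
  moreover have "trq S P * (\<Sum>I\<in>S. \<bar>c I\<bar>)^2 \<le> trq S P * (real (card S) * nsq S c)"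
    using tr_nonneg[OF assms(1,3)] sumabs_sq[OF assms(1)] by (intro mult_left_mono) auto
  ultimately show ?thesis by (simp add: mult_ac)
qed

lemma Qf_lin: "Qf S (\<lambda>I J. a * P I J + b * P' I J) c = a * Qf S P c + b * Qf S P' c"
  by (simp add: Qf_def algebra_simps sum.distrib sum_distrib_left)

lemma Qf_scale: "Qf S (\<lambda>I J. a * P I J) c = a * Qf S P c"
  by (simp add: Qf_def algebra_simps sum.distrib sum_distrib_left)

lemma Qf_sum: "Qf S (\<lambda>I J. \<Sum>k\<in>F. f k I J) c = (\<Sum>k\<in>F. Qf S (f k) c)"
  unfolding Qf_def by (simp add: sum_distrib_left sum_distrib_right sum.swap[of _ F] mult_ac)

lemma Qf_Id: "finite S \<Longrightarrow> Qf S (\<lambda>I J. if I = J then 1 else 0) c = nsq S c"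
  unfolding Qf_def nsq_def
proof (intro sum.cong refl)
  fix I assume "finite S" "I \<in> S"
  have "(\<Sum>J\<in>S. c I * (if I = J then 1 else 0) * c J) = (\<Sum>J\<in>S. if I = J then c I * c J else 0)"
    by (intro sum.cong) auto
  also have "\<dots> = (c I)^2" using \<open>finite S\<close> \<open>I \<in> S\<close> by (simp add: sum.delta power2_eq_square)
  finally show "(\<Sum>J\<in>S. c I * (if I = J then 1 else 0) * c J) = (c I)^2" .
qed

lemma Qf_cong: "(\<And>I. I \<in> S \<Longrightarrow> c I = c' I) \<Longrightarrow> Qf S P c = Qf S P c'"
  unfolding Qf_def by (intro sum.cong) auto

lemma nsq_cong: "(\<And>I. I \<in> S \<Longrightarrow> c I = c' I) \<Longrightarrow> nsq S c = nsq S c'"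
  unfolding nsq_def by (intro sum.cong) auto

lemma trq_Qf: "finite S \<Longrightarrow> trq S P = (\<Sum>I\<in>S. Qf S P (ev I))"
  unfolding trq_def by (intro sum.cong) (auto simp: Qf_ev)

lemma nsq_zero: "finite S \<Longrightarrow> nsq S c = 0 \<Longrightarrow> I \<in> S \<Longrightarrow> c I = 0"
  unfolding nsq_def by (subst (asm) sum_nonneg_eq_0_iff) auto

lemma doeblin:
  fixes pb :: "'i \<Rightarrow> ('a \<Rightarrow> real) \<Rightarrow> ('a \<Rightarrow> real)"
  assumes S: "finite S" "S \<noteq> {}" and T: "finite T"
    and P: "symm S P" "psd S P" and g: "g > 0"
    and ND: "\<forall>c e. \<exists>i\<in>T. \<bar>\<Sum>I\<in>S. pb i c I * e I\<bar> \<ge> g * sqrt (nsq S c) * sqrt (nsq S e)"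
  shows "(\<Sum>i\<in>T. Qf S P (pb i c)) \<ge> g^2 / real (card S) * trq S P * nsq S c"
proof -
  have "Max ((\<lambda>I. P I I) ` S) \<in> (\<lambda>I. P I I) ` S" using S by (intro Max_in) auto
  then obtain I0 where I00: "I0 \<in> S" "P I0 I0 = Max ((\<lambda>I. P I I) ` S)" by auto
  hence I0: "I0 \<in> S" "\<forall>I\<in>S. P I I \<le> P I0 I0" using S by auto
  define m where "m = P I0 I0"
  have cS: "real (card S) > 0" using S by (simp add: card_gt_0_iff)
  have tr: "trq S P \<le> real (card S) * m" unfolding trq_def m_def
    using sum_bounded_above[of S "\<lambda>I. P I I" "P I0 I0"] I0 by auto
  have sumnn: "0 \<le> (\<Sum>i\<in>T. Qf S P (pb i c))" using P(2) by (auto simp: psd_def intro: sum_nonneg)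
  show ?thesis
  proof (cases "m = 0")
    case True
    hence "trq S P \<le> 0" using tr by simp
    hence "g^2 * trq S P * nsq S c \<le> 0"
      using nsq_nonneg[of S c] by (intro mult_nonpos_nonneg mult_nonneg_nonpos) auto
    hence "g^2 * trq S P * nsq S c / real (card S) \<le> 0"
      using cS by (intro divide_nonpos_pos) auto
    hence "g^2 / real (card S) * trq S P * nsq S c \<le> 0" by simp
    thus ?thesis using sumnn by linarith
  next
    case False
    hence mpos: "m > 0" using psd_diag[OF P(2) S(1) I0(1)] by (simp add: m_def)
    define p where "p = (\<lambda>J. P J I0)"
    obtain i where i: "i \<in> T" "\<bar>\<Sum>I\<in>S. pb i c I * p I\<bar> \<ge> g * sqrt (nsq S c) * sqrt (nsq S p)"
      using ND by blast
    have Bfe: "Bf S P (pb i c) (ev I0) = (\<Sum>I\<in>S. pb i c I * p I)"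
      unfolding Bf_def p_def using S I0 by (intro sum.cong refl) (simp add: mult.assoc sum_distrib_left[symmetric] sum_ev')
    have CS: "(\<Sum>I\<in>S. pb i c I * p I)^2 \<le> Qf S P (pb i c) * m"
      using CS_psd[OF P, of "pb i c" "ev I0"] Bfe Qf_ev[OF S(1) I0(1)] by (simp add: m_def)
    have np: "m^2 \<le> nsq S p" unfolding nsq_def p_def m_def
      using member_le_sum[of I0 S "\<lambda>J. (P J I0)^2"] I0 S by auto
    have "(g * sqrt (nsq S c) * sqrt (nsq S p))^2 \<le> (\<Sum>I\<in>S. pb i c I * p I)^2"
    proof -
      have "0 \<le> g * sqrt (nsq S c) * sqrt (nsq S p)" using g by (simp add: nsq_nonneg)
      hence "(g * sqrt (nsq S c) * sqrt (nsq S p))^2 \<le> \<bar>\<Sum>I\<in>S. pb i c I * p I\<bar>^2"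
        by (intro power_mono i(2))
      thus ?thesis by simp
    qed
    hence "g^2 * nsq S c * nsq S p \<le> Qf S P (pb i c) * m"
      using CS nsq_nonneg[of S c] nsq_nonneg[of S p] by (simp add: power_mult_distrib)
    moreover have "g^2 * nsq S c * m^2 \<le> g^2 * nsq S c * nsq S p"
      using np nsq_nonneg[of S c] by (intro mult_left_mono) auto
    ultimately have "g^2 * nsq S c * m * m \<le> Qf S P (pb i c) * m" by (simp add: power2_eq_square mult_ac)
    hence q1: "g^2 * nsq S c * m \<le> Qf S P (pb i c)" using mpos by simp
    have "g^2 / real (card S) * trq S P * nsq S c \<le> g^2 / real (card S) * (real (card S) * m) * nsq S c"
      using tr cS nsq_nonneg[of S c] by (intro mult_right_mono mult_left_mono) auto
    also have "\<dots> = g^2 * nsq S c * m" using cS by simp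
    also have "\<dots> \<le> Qf S P (pb i c)" by (rule q1)
    also have "\<dots> \<le> (\<Sum>i\<in>T. Qf S P (pb i c))"
      using i(1) T P(2) by (intro member_le_sum) (auto simp: psd_def)
    finally show ?thesis .
  qed
qed

lemma posdef_unif:
  fixes P :: "'a \<Rightarrow> 'a \<Rightarrow> real"
  assumes S: "finite S" and pd: "\<forall>c. (\<exists>I\<in>S. c I \<noteq> 0) \<longrightarrow> Qf S P c > 0"
  shows "\<exists>\<epsilon>>0. \<forall>c. Qf S P c \<ge> \<epsilon> * nsq S c"
proof (cases "S = {}")
  case True thus ?thesis by (intro exI[of _ 1]) (simp add: Qf_def nsq_def)
next
  case False
  then obtain I0 where I0: "I0 \<in> S" by blast
  define T where "T = (PiE UNIV (\<lambda>_. {-1..1::real})) \<inter> {c. nsq S c = 1}"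
  have contQ: "continuous_on UNIV (\<lambda>c::'a\<Rightarrow>real. Qf S P c)"
    unfolding Qf_def by (intro continuous_intros continuous_on_product_coordinates)
  have contN: "continuous_on UNIV (\<lambda>c::'a\<Rightarrow>real. nsq S c)"
    unfolding nsq_def by (intro continuous_intros continuous_on_product_coordinates)
  have "compactin (product_topology (\<lambda>i. euclidean) UNIV) (PiE UNIV (\<lambda>_::'a. {-1..1::real}))"
    by (subst compactin_PiE) auto
  hence c1: "compact (PiE UNIV (\<lambda>_::'a. {-1..1::real}))" by (simp add: euclidean_product_topology)
  have "closed {c::'a\<Rightarrow>real. nsq S c = 1}"
    by (rule closed_Collect_eq[OF contN continuous_on_const])
  hence cT: "compact T" using compact_Int_closed[OF c1] by (simp add: T_def)
  have "nsq S (ev I0) = (\<Sum>I\<in>S. if I = I0 then 1 else 0)"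
    unfolding nsq_def by (intro sum.cong) (auto simp: ev_def)
  hence "nsq S (ev I0) = 1" using S I0 by (simp add: sum.delta)
  hence "ev I0 \<in> T" unfolding T_def by (auto simp: PiE_iff ev_def)
  hence Tne: "T \<noteq> {}" by blast
  obtain v where v: "v \<in> T" "\<forall>y\<in>T. Qf S P v \<le> Qf S P y"
    using continuous_attains_inf[OF cT Tne continuous_on_subset[OF contQ]] by blast
  have "\<exists>I\<in>S. v I \<noteq> 0"
  proof (rule ccontr)
    assume "\<not> ?thesis"
    hence "nsq S v = 0" by (simp add: nsq_def)
    thus False using v(1) by (simp add: T_def)
  qed
  hence epos: "Qf S P v > 0" using pd by blast
  show ?thesis
  proof (intro exI[of _ "Qf S P v"] conjI allI epos)
    fix c
    show "Qf S P v * nsq S c \<le> Qf S P c"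
    proof (cases "nsq S c = 0")
      case True
      have "Qf S P c = Qf S P (\<lambda>_. 0)" using nsq_zero[OF S True] by (intro Qf_cong) auto
      thus ?thesis using True by (simp add: Qf_def)
    next
      case False
      hence np: "nsq S c > 0" using nsq_nonneg[of S c] by simp
      define r where "r = 1 / sqrt (nsq S c)"
      have rpos: "r > 0" using np by (simp add: r_def)
      define c' where "c' = (\<lambda>I. if I \<in> S then r * c I else 0)"
      have nc': "nsq S c' = r^2 * nsq S c"
        unfolding nsq_def c'_def by (simp add: sum_distrib_left power_mult_distrib)
      hence nc1: "nsq S c' = 1" using np by (simp add: r_def power_divide)
      have "c' \<in> T" unfolding T_def
      proof (simp add: nc1 PiE_iff, intro allI)
        fix I
        show "-1 \<le> c' I \<and> c' I \<le> 1"
        proof (cases "I \<in> S")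
          case True
          have "(c' I)^2 \<le> nsq S c'" unfolding nsq_def
            using member_le_sum[of I S "\<lambda>J. (c' J)^2"] True S by auto
          hence "(c' I)^2 \<le> 1^2" using nc1 by simp
          thus ?thesis using abs_le_square_iff[of "c' I" 1] by (simp add: abs_le_iff) 
        qed (simp add: c'_def)
      qed
      hence le: "Qf S P v \<le> Qf S P c'" using v(2) by blast
      have "Qf S P c' = Qf S P (\<lambda>I. r * c I)" by (intro Qf_cong) (simp add: c'_def)
      also have "\<dots> = r^2 * Qf S P c" unfolding Qf_def
        by (simp add: sum_distrib_left power2_eq_square mult_ac)
      finally have "Qf S P v \<le> r^2 * Qf S P c" using le by simp
      hence "Qf S P v * nsq S c \<le> r^2 * nsq S c * Qf S P c"
        using np by (simp add: mult_right_mono mult_ac)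
      also have "r^2 * nsq S c = 1" using np by (simp add: r_def power_divide)
      finally show ?thesis by simp
    qed
  qed
qed


lemma cluster_point:
  fixes f :: "nat \<Rightarrow> 'z \<Rightarrow> real" and B :: "'z \<Rightarrow> real"
  assumes bnd: "\<And>n z. \<bar>f n z\<bar> \<le> B z"
  shows "\<exists>H. \<forall>Z. finite Z \<longrightarrow> (\<forall>\<epsilon>>0. \<forall>N0. \<exists>n\<ge>N0. \<forall>z\<in>Z. \<bar>f n z - H z\<bar> < \<epsilon>)"
proof -
  define S where "S = PiE UNIV (\<lambda>z. {-B z..B z})"
  have "compactin (product_topology (\<lambda>i. euclidean) UNIV) S"
    unfolding S_def by (subst compactin_PiE) auto
  hence cS: "compact S" by (simp add: euclidean_product_topology)
  define F where "F = filtermap f sequentially"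
  have Fnb: "F \<noteq> bot" unfolding F_def by (simp add: filtermap_bot_iff)
  have "eventually (\<lambda>x. x \<in> S) F" unfolding F_def eventually_filtermap
  proof (intro always_eventually allI)
    fix n show "f n \<in> S" unfolding S_def PiE_iff
      using bnd[of n] by (simp add: abs_le_iff) (smt (verit))
  qed
  then obtain H where H: "H \<in> S" "inf (nhds H) F \<noteq> bot"
    using cS Fnb unfolding compact_filter by blast
  show ?thesis
  proof (intro exI[of _ H] allI impI)
    fix Z :: "'z set" and \<epsilon> :: real and N0 assume Z: "finite Z" "\<epsilon> > 0"
    show "\<exists>n\<ge>N0. \<forall>z\<in>Z. \<bar>f n z - H z\<bar> < \<epsilon>"
    proof (rule ccontr)
      assume nn: "\<not> ?thesis"
      have o: "open {g. \<forall>z\<in>Z. g (id z) \<in> ball (H z) \<epsilon>}"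
        by (rule product_topology_basis') (use Z in auto)
      have "eventually (\<lambda>g. \<forall>z\<in>Z. g (id z) \<in> ball (H z) \<epsilon>) (nhds H)"
        using eventually_nhds_in_open[OF o, of H] Z by auto
      moreover have "eventually (\<lambda>g. \<not> (\<forall>z\<in>Z. g (id z) \<in> ball (H z) \<epsilon>)) F"
        unfolding F_def eventually_filtermap eventually_sequentially
        using nn by (intro exI[of _ N0]) (auto simp: dist_real_def abs_minus_commute)
      ultimately have "eventually (\<lambda>_. False) (inf (nhds H) F)"
        unfolding eventually_inf by blast
      thus False using H(2) by (simp add: eventually_False)
    qed
  qed
qed

lemma dgam_self[simp]: "dgam g x x = 0" by (simp add: dgam_def)

lemma dgam_nonneg: "0 < g \<Longrightarrow> 0 \<le> dgam g x y" by (simp add: dgam_def)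

lemma dgam_le1: "0 < g \<Longrightarrow> g < 1 \<Longrightarrow> dgam g x y \<le> 1"
  by (simp add: dgam_def power_le_one)

lemma dgam_sym: "dgam g x y = dgam g y x"
  unfolding dgam_def by (simp add: eq_commute)

lemma dgam_scons: "dgam g (scons i x) (scons i y) = g * dgam g x y"
proof (cases "x = y")
  case True thus ?thesis by simp
next
  case False
  then obtain k where k: "x k \<noteq> y k" by auto
  have ne: "scons i x \<noteq> scons i y" using k unfolding scons_def
    by (metis nat.simps(5))
  have "(LEAST n. scons i x n \<noteq> scons i y n) = Suc (LEAST m. scons i x (Suc m) \<noteq> scons i y (Suc m))"
    by (rule Least_Suc[of _ "Suc k"]) (use k in \<open>auto simp: scons_def\<close>)
  also have "(\<lambda>m. scons i x (Suc m) \<noteq> scons i y (Suc m)) = (\<lambda>m. x m \<noteq> y m)"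
    by (simp add: scons_def)
  finally show ?thesis using False ne by (simp add: dgam_def)
qed

lemma dgam_prefix:
  assumes "0 < g" "g \<le> 1" "\<forall>k<n. x k = y k"
  shows "dgam g x y \<le> g ^ n"
proof (cases "x = y")
  case True thus ?thesis using assms by simp
next
  case False
  then obtain k where k: "x k \<noteq> y k" by auto
  have "x (LEAST k. x k \<noteq> y k) \<noteq> y (LEAST k. x k \<noteq> y k)" using k by (rule LeastI)
  hence "n \<le> (LEAST k. x k \<noteq> y k)" using assms(3) by (meson not_le)
  thus ?thesis using False assms by (simp add: dgam_def power_decreasing)
qed

lemma scons_Sigma: "x \<in> Sigma_sp t \<Longrightarrow> i < t \<Longrightarrow> scons i x \<in> Sigma_sp t"
  by (auto simp: Sigma_sp_def scons_def split: nat.split)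

lemma koenig:
  assumes step: "\<And>w. (\<forall>i<t. w @ [i] \<in> G) \<Longrightarrow> w \<in> G"
    and cover: "\<forall>x\<in>Sigma_sp t. \<exists>n. map x [0..<n] \<in> G"
  shows "[] \<in> G"
proof (rule ccontr)
  assume e: "[] \<notin> G"
  define nxt where "nxt w = (SOME i. i < t \<and> w @ [i] \<notin> G)" for w
  have nxt: "w \<notin> G \<Longrightarrow> nxt w < t \<and> w @ [nxt w] \<notin> G" for w
    unfolding nxt_def by (rule someI_ex) (use step in blast)
  define ws where "ws = rec_nat [] (\<lambda>n w. w @ [nxt w])"
  have ws0: "ws 0 = []" and wsS: "ws (Suc n) = ws n @ [nxt (ws n)]" for n by (simp_all add: ws_def)
  have notG: "ws n \<notin> G" for n by (induction n) (use e nxt in \<open>auto simp: ws0 wsS\<close>)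
  define x where "x k = nxt (ws k)" for k
  have xS: "x \<in> Sigma_sp t" unfolding Sigma_sp_def x_def using nxt notG by blast
  have "ws n = map x [0..<n]" for n by (induction n) (auto simp: ws0 wsS x_def)
  thus False using cover xS notG by metis
qed

lemma koenig_unif:
  fixes Prop :: "real \<Rightarrow> (nat \<Rightarrow> nat) \<Rightarrow> bool"
  assumes cover: "\<forall>x\<in>Sigma_sp t. \<exists>n \<epsilon>. \<epsilon> > 0 \<and> (\<forall>y\<in>Sigma_sp t. (\<forall>k<n. y k = x k) \<longrightarrow> Prop \<epsilon> y)"
    and mono: "\<And>\<epsilon> \<epsilon>' y. 0 < \<epsilon>' \<Longrightarrow> \<epsilon>' \<le> \<epsilon> \<Longrightarrow> Prop \<epsilon> y \<Longrightarrow> Prop \<epsilon>' y"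
  shows "\<exists>\<epsilon>>0. \<forall>y\<in>Sigma_sp t. Prop \<epsilon> y"
proof -
  define G where "G = {w. \<exists>\<epsilon>>0. \<forall>y\<in>Sigma_sp t. map y [0..<length w] = w \<longrightarrow> Prop \<epsilon> y}"
  have "[] \<in> G"
  proof (rule koenig[of t])
    fix w assume all: "\<forall>i<t. w @ [i] \<in> G"
    then obtain e where e: "\<forall>i<t. e i > 0 \<and> (\<forall>y\<in>Sigma_sp t. map y [0..<Suc (length w)] = w @ [i] \<longrightarrow> Prop (e i) y)"
      unfolding G_def by simp metis
    define \<epsilon> where "\<epsilon> = Min (insert 1 (e ` {..<t}))"
    have epos: "\<epsilon> > 0" unfolding \<epsilon>_def using e by (subst Min_gr_iff) auto
    have ele: "i < t \<Longrightarrow> \<epsilon> \<le> e i" for i unfolding \<epsilon>_def by (intro Min_le) auto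
    show "w \<in> G" unfolding G_def
    proof (intro CollectI exI[of _ \<epsilon>] conjI epos ballI impI)
      fix y assume y: "y \<in> Sigma_sp t" "map y [0..<length w] = w"
      have yt: "y (length w) < t" using y(1) by (simp add: Sigma_sp_def)
      have "map y [0..<Suc (length w)] = w @ [y (length w)]" using y(2) by simp
      hence "Prop (e (y (length w))) y" using e yt y(1) by blast
      thus "Prop \<epsilon> y" using mono[OF epos ele[OF yt]] by blast
    qed
  next
    show "\<forall>x\<in>Sigma_sp t. \<exists>n. map x [0..<n] \<in> G"
    proof
      fix x assume x: "x \<in> Sigma_sp t"
      then obtain n \<epsilon> where ne: "\<epsilon> > 0" "\<forall>y\<in>Sigma_sp t. (\<forall>k<n. y k = x k) \<longrightarrow> Prop \<epsilon> y"
        using cover by blast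
      have "map x [0..<n] \<in> G" unfolding G_def
      proof (intro CollectI exI[of _ \<epsilon>] conjI ne(1) ballI impI)
        fix y assume y: "y \<in> Sigma_sp t" "map y [0..<length (map x [0..<n])] = map x [0..<n]"
        have "\<forall>k<n. y k = x k"
        proof (intro allI impI)
          fix k assume "k < n"
          thus "y k = x k" using arg_cong[OF y(2), of "\<lambda>l. l ! k"] by simp
        qed
        thus "Prop \<epsilon> y" using ne y(1) by blast
      qed
      thus "\<exists>n. map x [0..<n] \<in> G" by blast
    qed
  qed
  thus ?thesis unfolding G_def by simp
qed


lemma finite_qidx[simp]: "finite (qidx q :: 'n::{finite,linorder} set set)"
  by simp

lemma qidx_ne: "q \<le> card (UNIV :: 'n::{finite,linorder} set) \<Longrightarrow> (qidx q :: 'n set set) \<noteq> {}"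
  unfolding qidx_def using obtain_subset_with_card_n[of q "UNIV :: 'n set"] by auto

lemma Psi_Qf:
  fixes L :: "real^('n::{finite,linorder})^('n::{finite,linorder})"
  shows "Qf (qidx q) (Psi_op L q B) c = Qf (qidx q) B (pullback L q c)"
proof -
  let ?S = "qidx q :: 'n set set"
  let ?m = "minor L q"
  have "Qf ?S (Psi_op L q B) c = (\<Sum>K\<in>?S. \<Sum>K'\<in>?S. \<Sum>J\<in>?S. \<Sum>J'\<in>?S. c K * ?m K J * B J J' * ?m K' J' * c K')"
    unfolding Qf_def Psi_op_def by (simp add: sum_distrib_left sum_distrib_right mult_ac)
  also have "\<dots> = (\<Sum>K\<in>?S. \<Sum>J\<in>?S. \<Sum>K'\<in>?S. \<Sum>J'\<in>?S. c K * ?m K J * B J J' * ?m K' J' * c K')"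
    by (intro sum.cong refl sum.swap)
  also have "\<dots> = (\<Sum>J\<in>?S. \<Sum>K\<in>?S. \<Sum>K'\<in>?S. \<Sum>J'\<in>?S. c K * ?m K J * B J J' * ?m K' J' * c K')"
    by (rule sum.swap)
  also have "\<dots> = (\<Sum>J\<in>?S. \<Sum>K\<in>?S. \<Sum>J'\<in>?S. \<Sum>K'\<in>?S. c K * ?m K J * B J J' * ?m K' J' * c K')"
    by (intro sum.cong refl sum.swap)
  also have "\<dots> = (\<Sum>J\<in>?S. \<Sum>J'\<in>?S. \<Sum>K\<in>?S. \<Sum>K'\<in>?S. c K * ?m K J * B J J' * ?m K' J' * c K')"
    by (intro sum.cong refl sum.swap)
  also have "\<dots> = Qf ?S B (pullback L q c)"
    unfolding Qf_def pullback_def by (simp add: sum_distrib_left sum_distrib_right mult_ac)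
  finally show ?thesis .
qed

lemma ruelle_Qf:
  "Qf (qidx q) (ruelle t \<psi> q W A x) c =
     (\<Sum>i<t. exp (W (scons i x)) * Qf (qidx q) (A (scons i x)) (pullback (Dlin (\<psi> i)) q c))"
proof -
  have "Qf (qidx q) (ruelle t \<psi> q W A x) c =
     (\<Sum>i<t. Qf (qidx q) (\<lambda>K K'. exp (W (scons i x)) * Psi_op (Dlin (\<psi> i)) q (A (scons i x)) K K') c)"
    unfolding ruelle_def by (rule Qf_sum)
  also have "\<dots> = (\<Sum>i<t. exp (W (scons i x)) * Qf (qidx q) (A (scons i x)) (pullback (Dlin (\<psi> i)) q c))"
    by (intro sum.cong refl) (simp add: Qf_scale Psi_Qf)
  finally show ?thesis .
qed

lemma Psi_symm:
  fixes L :: "real^('n::{finite,linorder})^('n::{finite,linorder})"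
  assumes "symm (qidx q) B"
  shows "symm (qidx q) (Psi_op L q B)"
  unfolding symm_def Psi_op_def
proof (intro ballI)
  fix K K' :: "'n set" assume "K \<in> qidx q" "K' \<in> qidx q"
  have "(\<Sum>J\<in>qidx q. \<Sum>J'\<in>qidx q. minor L q K J * B J J' * minor L q K' J') =
        (\<Sum>J'\<in>qidx q. \<Sum>J\<in>qidx q. minor L q K J * B J J' * minor L q K' J')" by (rule sum.swap)
  also have "\<dots> = (\<Sum>J'\<in>qidx q. \<Sum>J\<in>qidx q. minor L q K' J' * B J' J * minor L q K J)"
    using assms unfolding symm_def by (intro sum.cong refl) (auto simp: mult_ac)
  finally show "(\<Sum>J\<in>qidx q. \<Sum>J'\<in>qidx q. minor L q K J * B J J' * minor L q K' J') =
        (\<Sum>J\<in>qidx q. \<Sum>J'\<in>qidx q. minor L q K' J * B J J' * minor L q K J')" .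
qed

lemma ruelle_symm:
  assumes "\<forall>i<t. symm (qidx q) (A (scons i x))"
  shows "symm (qidx q) (ruelle t \<psi> q W A x)"
proof -
  have "\<forall>i<t. symm (qidx q) (Psi_op (Dlin (\<psi> i)) q (A (scons i x)))" using assms Psi_symm by blast
  thus ?thesis unfolding symm_def ruelle_def by (auto intro!: sum.cong)
qed

lemma polarization:
  assumes "finite S" "symm S P" "symm S P'" "\<forall>c. Qf S P c = Qf S P' c" "I \<in> S" "J \<in> S"
  shows "P I J = P' I J"
proof -
  have "Qf S P (\<lambda>K. ev I K + 1 * ev J K) = Qf S P' (\<lambda>K. ev I K + 1 * ev J K)" using assms(4) by blast
  hence "Qf S P (ev I) + 2 * Bf S P (ev I) (ev J) + Qf S P (ev J) = Qf S P' (ev I) + 2 * Bf S P' (ev I) (ev J) + Qf S P' (ev J)"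
    using Qf_comb[OF assms(2), of "ev I" 1 "ev J"] Qf_comb[OF assms(3), of "ev I" 1 "ev J"] by simp
  moreover have "Qf S P (ev I) = Qf S P' (ev I)" "Qf S P (ev J) = Qf S P' (ev J)" using assms(4) by auto
  ultimately show ?thesis using Bf_ev[OF assms(1,5,6)] by simp
qed

lemma normq_nsq: "normq q c = sqrt (nsq (qidx q) c)"
  by (simp add: normq_def ipq_def nsq_def power2_eq_square)

lemma ND_conv:
  assumes "\<exists>\<gamma>'>0. \<forall>c e :: 'n::{finite,linorder} set \<Rightarrow> real. \<exists>i<t.
               \<bar>ipq q (pullback (Dlin (\<psi> i)) q c) e\<bar> \<ge> \<gamma>' * normq q c * normq q e"
  shows "\<exists>g>0. \<forall>c e :: 'n set \<Rightarrow> real. \<exists>i\<in>{..<t}.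
       \<bar>\<Sum>I\<in>qidx q. pullback (Dlin (\<psi> i)) q c I * e I\<bar> \<ge> g * sqrt (nsq (qidx q) c) * sqrt (nsq (qidx q) e)"
  using assms by (simp add: normq_nsq ipq_def) blast


lemma QfP_cong: "(\<And>I J. I \<in> S \<Longrightarrow> J \<in> S \<Longrightarrow> P I J = P' I J) \<Longrightarrow> Qf S P c = Qf S P' c"
  unfolding Qf_def by (intro sum.cong) auto

lemma posdef_Qf: "posdef q P \<longleftrightarrow> (\<forall>c. (\<exists>I\<in>qidx q. c I \<noteq> 0) \<longrightarrow> Qf (qidx q) P c > 0)"
  by (simp add: posdef_def Qf_def)

lemma posdef_psd: "posdef q P \<Longrightarrow> psd (qidx q) P"
  unfolding psd_def
proof
  fix c assume pd: "posdef q P"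
  show "0 \<le> Qf (qidx q) P c"
  proof (cases "\<exists>I\<in>qidx q. c I \<noteq> 0")
    case True thus ?thesis using pd by (simp add: posdef_Qf less_imp_le)
  next
    case False
    hence "Qf (qidx q) P c = Qf (qidx q) P (\<lambda>_. 0)" by (intro Qf_cong) auto
    thus ?thesis by (simp add: Qf_def)
  qed
qed

locale sett =
  fixes t :: nat and \<gamma> \<alpha> :: real
    and \<psi> :: "nat \<Rightarrow> real^('n::{finite,linorder}) \<Rightarrow> real^('n::{finite,linorder})"
    and q :: nat
  assumes gam: "0 < \<gamma>" "\<gamma> < 1" and alp: "0 < \<alpha>"
    and qne: "(qidx q :: 'n set set) \<noteq> {}"
    and ND: "\<exists>g>0. \<forall>c e :: 'n set \<Rightarrow> real. \<exists>i\<in>{..<t}.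
       \<bar>\<Sum>I\<in>qidx q. pullback (Dlin (\<psi> i)) q c I * e I\<bar> \<ge> g * sqrt (nsq (qidx q) c) * sqrt (nsq (qidx q) e)"
begin

abbreviation "S \<equiv> (qidx q :: 'n set set)"
abbreviation "Sg \<equiv> Sigma_sp t"
abbreviation "R W A \<equiv> ruelle t \<psi> q W A"
abbreviation "pb i \<equiv> pullback (Dlin (\<psi> i)) q"

definition "x0 = (\<lambda>_::nat. 0::nat)"

lemma tpos: "t > 0"
proof -
  from ND obtain g where "\<exists>i\<in>{..<t}. True" by blast
  thus ?thesis by auto
qed

lemma x0S: "x0 \<in> Sg" using tpos by (simp add: x0_def Sigma_sp_def)

lemma Npos: "real (card (qidx q :: 'n set set)) > 0" using qne by (simp add: card_gt_0_iff)

definition eigpair :: "((nat \<Rightarrow> nat) \<Rightarrow> real) \<Rightarrow> real \<Rightarrow> ((nat \<Rightarrow> nat) \<Rightarrow> ('n set \<Rightarrow> 'n set \<Rightarrow> real)) \<Rightarrow> bool" where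
  "eigpair W \<beta> A \<longleftrightarrow> \<beta> > 0 \<and> contM t \<gamma> q A \<and> (\<forall>x\<in>Sg. posdef q (A x)) \<and>
      (\<forall>x\<in>Sg. \<forall>K\<in>S. \<forall>K'\<in>S. R W A x K K' = \<beta> * A x K K')"

lemma eig_Q: "eigpair W \<beta> A \<Longrightarrow> x \<in> Sg \<Longrightarrow> Qf S (R W A x) c = \<beta> * Qf S (A x) c"
proof -
  assume e: "eigpair W \<beta> A" "x \<in> Sg"
  have "Qf S (R W A x) c = Qf S (\<lambda>I J. \<beta> * A x I J) c"
    using e by (intro QfP_cong) (auto simp: eigpair_def)
  thus ?thesis by (simp add: Qf_scale)
qed

lemma unif_bounds:
  assumes cA: "contM t \<gamma> q A" and pA: "\<forall>x\<in>Sg. posdef q (A x)"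
  shows "\<exists>\<epsilon>>0. \<forall>x\<in>Sg. \<forall>c. \<epsilon> * nsq S c \<le> Qf S (A x) c \<and> Qf S (A x) c \<le> (1/\<epsilon>) * nsq S c"
proof (rule koenig_unif)
  show "\<And>\<epsilon> \<epsilon>' y. 0 < \<epsilon>' \<Longrightarrow> \<epsilon>' \<le> \<epsilon> \<Longrightarrow>
      (\<forall>c. \<epsilon> * nsq S c \<le> Qf S (A y) c \<and> Qf S (A y) c \<le> 1 / \<epsilon> * nsq S c) \<Longrightarrow>
      (\<forall>c. \<epsilon>' * nsq S c \<le> Qf S (A y) c \<and> Qf S (A y) c \<le> 1 / \<epsilon>' * nsq S c)"
  proof -
    fix \<epsilon> \<epsilon>' :: real and y assume a: "0 < \<epsilon>'" "\<epsilon>' \<le> \<epsilon>"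
      "\<forall>c. \<epsilon> * nsq S c \<le> Qf S (A y) c \<and> Qf S (A y) c \<le> 1 / \<epsilon> * nsq S c"
    show "\<forall>c. \<epsilon>' * nsq S c \<le> Qf S (A y) c \<and> Qf S (A y) c \<le> 1 / \<epsilon>' * nsq S c"
    proof
      fix c
      have "\<epsilon>' * nsq S c \<le> \<epsilon> * nsq S c" using a nsq_nonneg[of S c] by (intro mult_right_mono) auto
      moreover have "1/\<epsilon> * nsq S c \<le> 1/\<epsilon>' * nsq S c" using a nsq_nonneg[of S c]
        by (intro mult_right_mono) (auto simp: frac_le)
      moreover have "\<epsilon> * nsq S c \<le> Qf S (A y) c \<and> Qf S (A y) c \<le> 1 / \<epsilon> * nsq S c" using a(3) by blast
      ultimately show "\<epsilon>' * nsq S c \<le> Qf S (A y) c \<and> Qf S (A y) c \<le> 1 / \<epsilon>' * nsq S c" by linarith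
    qed
  qed
next
  show "\<forall>x\<in>Sg. \<exists>n \<epsilon>. \<epsilon> > 0 \<and> (\<forall>y\<in>Sg. (\<forall>k<n. y k = x k) \<longrightarrow>
      (\<forall>c. \<epsilon> * nsq S c \<le> Qf S (A y) c \<and> Qf S (A y) c \<le> 1 / \<epsilon> * nsq S c))"
  proof
    fix x assume x: "x \<in> Sg"
    obtain e1 where e1: "e1 > 0" "\<forall>c. Qf S (A x) c \<ge> e1 * nsq S c"
      using posdef_unif[of S "A x"] pA x by (auto simp: posdef_Qf)
    define Mx where "Mx = (\<Sum>I\<in>S. \<Sum>J\<in>S. \<bar>A x I J\<bar>)"
    have Mx: "\<forall>I\<in>S. \<forall>J\<in>S. \<bar>A x I J\<bar> \<le> Mx"
    proof (intro ballI)
      fix I J assume IJ: "I \<in> S" "J \<in> S"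
      have "\<bar>A x I J\<bar> \<le> (\<Sum>J\<in>S. \<bar>A x I J\<bar>)" using IJ by (intro member_le_sum) auto
      also have "\<dots> \<le> Mx" unfolding Mx_def using IJ by (intro member_le_sum[of I S "\<lambda>I. \<Sum>J\<in>S. \<bar>A x I J\<bar>"]) (auto intro: sum_nonneg)
      finally show "\<bar>A x I J\<bar> \<le> Mx" .
    qed
    have Mx0: "0 \<le> Mx" unfolding Mx_def by (intro sum_nonneg) auto
    define e2 where "e2 = e1 / (2 * (real (card S)))"
    have e2: "e2 > 0" using e1 Npos by (simp add: e2_def)
    obtain \<delta> where \<delta>: "\<delta> > 0" "\<forall>y\<in>Sg. dgam \<gamma> x y < \<delta> \<longrightarrow> (\<forall>I J. \<bar>A y I J - A x I J\<bar> < e2)"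
      using cA x e2 unfolding contM_def by blast
    obtain n where n: "\<gamma>^n < \<delta>" using real_arch_pow_inv[OF \<delta>(1) gam(2)] by blast
    define \<epsilon> where "\<epsilon> = min (e1/2) (1 / (Mx * (real (card S)) + e1/2))"
    have "Mx * (real (card S)) \<ge> 0" using Mx0 by simp
    hence ep: "\<epsilon> > 0" using e1 by (simp add: \<epsilon>_def add_nonneg_pos)
    show "\<exists>n \<epsilon>. \<epsilon> > 0 \<and> (\<forall>y\<in>Sg. (\<forall>k<n. y k = x k) \<longrightarrow>
      (\<forall>c. \<epsilon> * nsq S c \<le> Qf S (A y) c \<and> Qf S (A y) c \<le> 1 / \<epsilon> * nsq S c))"
    proof (intro exI[of _ n] exI[of _ \<epsilon>] conjI ep ballI impI allI)
      fix y c assume y: "y \<in> Sg" "\<forall>k<n. y k = x k"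
      have "dgam \<gamma> x y \<le> \<gamma>^n" using y(2) gam by (intro dgam_prefix) auto
      hence "\<forall>I J. \<bar>A y I J - A x I J\<bar> < e2" using \<delta> y n by auto
      hence "\<bar>Qf S (A y) c - Qf S (A x) c\<bar> \<le> e2 * (\<Sum>I\<in>S. \<bar>c I\<bar>)^2"
        by (intro Qf_diff) (auto intro: less_imp_le)
      also have "\<dots> \<le> e2 * ((real (card S)) * nsq S c)" using e2 by (intro mult_left_mono sumabs_sq) auto
      also have "\<dots> = e1/2 * nsq S c" using Npos qne by (simp add: e2_def)
      finally have d: "\<bar>Qf S (A y) c - Qf S (A x) c\<bar> \<le> e1 / 2 * nsq S c" .
      have up: "Qf S (A x) c \<le> Mx * (real (card S)) * nsq S c"
      proof -
        have "\<bar>Qf S (A x) c - Qf S (\<lambda>I J. 0) c\<bar> \<le> Mx * (\<Sum>I\<in>S. \<bar>c I\<bar>)^2"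
          using Mx by (intro Qf_diff) auto
        moreover have "Qf S (\<lambda>I J. 0) c = 0" by (simp add: Qf_def)
        moreover have "Mx * (\<Sum>I\<in>S. \<bar>c I\<bar>)^2 \<le> Mx * ((real (card S)) * nsq S c)"
          using Mx0 by (intro mult_left_mono sumabs_sq) auto
        ultimately show ?thesis by (simp add: mult_ac)
      qed
      have ns: "0 \<le> nsq S c" by (rule nsq_nonneg)
      have "\<epsilon> * nsq S c \<le> e1/2 * nsq S c" using ns by (intro mult_right_mono) (auto simp: \<epsilon>_def)
      also have "\<dots> \<le> Qf S (A y) c" using d e1(2)[rule_format, of c] abs_le_iff[of "Qf S (A y) c - Qf S (A x) c"] by linarith
      finally have l: "\<epsilon> * nsq S c \<le> Qf S (A y) c" .
      have d2: "Qf S (A y) c \<le> Qf S (A x) c + e1/2 * nsq S c" using d by arith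
      have "Qf S (A y) c \<le> (Mx * (real (card S)) + e1/2) * nsq S c" using d2 up by (simp add: algebra_simps)
      also have "\<dots> \<le> 1/\<epsilon> * nsq S c"
      proof (intro mult_right_mono ns)
        have "\<epsilon> \<le> 1 / (Mx * (real (card S)) + e1/2)" by (simp add: \<epsilon>_def)
        moreover have "Mx * (real (card S)) + e1/2 > 0" using Mx0 Npos e1 by (simp add: add_nonneg_pos)
        ultimately show "Mx * (real (card S)) + e1/2 \<le> 1/\<epsilon>" using ep by (simp add: field_simps)
      qed
      finally have u: "Qf S (A y) c \<le> 1 / \<epsilon> * nsq S c" .
      show "\<epsilon> * nsq S c \<le> Qf S (A y) c" by (rule l)
      show "Qf S (A y) c \<le> 1 / \<epsilon> * nsq S c" by (rule u)
    qed
  qed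
qed

lemma comparison:
  assumes e1: "eigpair W1 \<beta>1 A1" and e2: "eigpair W2 \<beta>2 A2"
    and W: "\<forall>x\<in>Sg. W1 x \<le> W2 x + \<delta>"
  shows "\<beta>1 \<le> exp \<delta> * \<beta>2"
proof -
  obtain a1 where a1: "a1 > 0" "\<forall>x\<in>Sg. \<forall>c. a1 * nsq S c \<le> Qf S (A1 x) c \<and> Qf S (A1 x) c \<le> (1/a1) * nsq S c"
    using unif_bounds[of A1] e1 by (auto simp: eigpair_def)
  obtain a2 where a2: "a2 > 0" "\<forall>x\<in>Sg. \<forall>c. a2 * nsq S c \<le> Qf S (A2 x) c \<and> Qf S (A2 x) c \<le> (1/a2) * nsq S c"
    using unif_bounds[of A2] e2 by (auto simp: eigpair_def)
  have b1: "\<beta>1 > 0" and b2: "\<beta>2 > 0" using e1 e2 by (auto simp: eigpair_def)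
  define Kc where "Kc = (1/a1) / a2"
  have Kc: "Kc > 0" using a1 a2 by (simp add: Kc_def)
  have psd2: "\<forall>x\<in>Sg. \<forall>c. 0 \<le> Qf S (A2 x) c"
    using e2 posdef_psd unfolding eigpair_def psd_def by blast
  have claim: "\<forall>x\<in>Sg. \<forall>c. \<beta>1^n * Qf S (A1 x) c \<le> Kc * (exp \<delta> * \<beta>2)^n * Qf S (A2 x) c" for n
  proof (induction n)
    case 0
    show ?case
    proof (intro ballI allI)
      fix x c assume x: "x \<in> Sg"
      have "Qf S (A1 x) c \<le> (1/a1) * nsq S c" using a1 x by blast
      also have "\<dots> \<le> (1/a1) * (Qf S (A2 x) c / a2)"
        using a1 a2 x by (intro mult_left_mono) (auto simp: field_simps)
      finally show "\<beta>1^0 * Qf S (A1 x) c \<le> Kc * (exp \<delta> * \<beta>2)^0 * Qf S (A2 x) c"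
        by (simp add: Kc_def)
    qed
  next
    case (Suc n)
    show ?case
    proof (intro ballI allI)
      fix x c assume x: "x \<in> Sg"
      have ix: "i < t \<Longrightarrow> scons i x \<in> Sg" for i using x by (rule scons_Sigma)
      have "\<beta>1^Suc n * Qf S (A1 x) c = \<beta>1^n * Qf S (R W1 A1 x) c"
        using eig_Q[OF e1 x] by simp
      also have "\<dots> = (\<Sum>i<t. exp (W1 (scons i x)) * (\<beta>1^n * Qf S (A1 (scons i x)) (pb i c)))"
        by (simp add: ruelle_Qf sum_distrib_left mult_ac)
      also have "\<dots> \<le> (\<Sum>i<t. exp (W2 (scons i x) + \<delta>) * (Kc * (exp \<delta> * \<beta>2)^n * Qf S (A2 (scons i x)) (pb i c)))"
      proof (intro sum_mono)
        fix i assume "i \<in> {..<t}"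
        hence i: "scons i x \<in> Sg" using ix by auto
        have "exp (W1 (scons i x)) * (\<beta>1^n * Qf S (A1 (scons i x)) (pb i c)) \<le>
              exp (W1 (scons i x)) * (Kc * (exp \<delta> * \<beta>2)^n * Qf S (A2 (scons i x)) (pb i c))"
          using Suc.IH i by (intro mult_left_mono) auto
        also have "\<dots> \<le> exp (W2 (scons i x) + \<delta>) * (Kc * (exp \<delta> * \<beta>2)^n * Qf S (A2 (scons i x)) (pb i c))"
          using W i psd2 Kc b2 by (intro mult_right_mono) auto
        finally show "exp (W1 (scons i x)) * (\<beta>1^n * Qf S (A1 (scons i x)) (pb i c)) \<le>
              exp (W2 (scons i x) + \<delta>) * (Kc * (exp \<delta> * \<beta>2)^n * Qf S (A2 (scons i x)) (pb i c))" .
      qed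
      also have "\<dots> = Kc * (exp \<delta> * \<beta>2)^n * exp \<delta> * Qf S (R W2 A2 x) c"
        by (simp add: ruelle_Qf sum_distrib_left exp_add mult_ac)
      also have "\<dots> = Kc * (exp \<delta> * \<beta>2)^Suc n * Qf S (A2 x) c"
        using eig_Q[OF e2 x] by (simp add: mult_ac)
      finally show "\<beta>1^Suc n * Qf S (A1 x) c \<le> Kc * (exp \<delta> * \<beta>2)^Suc n * Qf S (A2 x) c" .
    qed
  qed
  obtain I0 where I0: "I0 \<in> S" using qne by blast
  have n1: "nsq S (ev I0) = 1"
  proof -
    have "nsq S (ev I0) = (\<Sum>I\<in>S. if I = I0 then 1 else 0)"
      unfolding nsq_def by (intro sum.cong) (auto simp: ev_def)
    thus ?thesis using I0 by (simp add: sum.delta)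
  qed
  define r where "r = \<beta>1 / (exp \<delta> * \<beta>2)"
  have rpos: "r > 0" using b1 b2 by (simp add: r_def)
  have bound: "r^n \<le> Kc / (a1 * a2)" for n
  proof -
    have "a1 * nsq S (ev I0) \<le> Qf S (A1 x0) (ev I0)" using a1(2) x0S by blast
    hence "\<beta>1^n * a1 \<le> \<beta>1^n * Qf S (A1 x0) (ev I0)"
      using n1 b1 by (intro mult_left_mono) auto
    also have "\<dots> \<le> Kc * (exp \<delta> * \<beta>2)^n * Qf S (A2 x0) (ev I0)" using claim x0S by blast
    also have "\<dots> \<le> Kc * (exp \<delta> * \<beta>2)^n * (1/a2)"
    proof -
      have "Qf S (A2 x0) (ev I0) \<le> (1/a2) * nsq S (ev I0)" using a2(2) x0S by blast
      thus ?thesis using n1 Kc b2 by (intro mult_left_mono) auto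
    qed
    finally have "\<beta>1^n * a1 \<le> Kc * (exp \<delta> * \<beta>2)^n * (1/a2)" .
    hence "\<beta>1^n / (exp \<delta> * \<beta>2)^n \<le> Kc / (a1 * a2)"
      using a1 a2 b2 by (simp add: field_simps)
    thus ?thesis by (simp add: r_def power_divide)
  qed
  have "r \<le> 1"
  proof (rule ccontr)
    assume "\<not> r \<le> 1"
    then obtain n where "Kc / (a1 * a2) < r^n" using real_arch_pow[of r "Kc / (a1 * a2)"] by auto
    thus False using bound[of n] by simp
  qed
  thus ?thesis using b2 by (simp add: r_def field_simps)
qed

end


context sett begin

lemma gpow: "0 < \<gamma> powr \<alpha>" "\<gamma> powr \<alpha> < 1"
  using gam alp powr_less_mono2[of \<alpha> \<gamma> 1] by auto

lemma dpow_le1: "dgam \<gamma> x y powr \<alpha> \<le> 1"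
  using dgam_nonneg[OF gam(1)] dgam_le1[OF gam] alp by (intro powr_le1) auto

lemma dpow_nonneg: "0 \<le> dgam \<gamma> x y powr \<alpha>" by simp

lemma dpow_scons: "dgam \<gamma> (scons i x) (scons i y) powr \<alpha> = \<gamma> powr \<alpha> * dgam \<gamma> x y powr \<alpha>"
  using gam dgam_nonneg[OF gam(1)] by (simp add: dgam_scons powr_mult)

lemma Rn_mono:
  assumes "\<forall>y\<in>Sg. \<forall>c. Qf S (A y) c \<le> a * Qf S (B y) c"
  shows "\<forall>x\<in>Sg. \<forall>c. Qf S ((R W ^^ n) A x) c \<le> a * Qf S ((R W ^^ n) B x) c"
proof (induction n)
  case 0 thus ?case using assms by simp
next
  case (Suc n)
  show ?case
  proof (intro ballI allI)
    fix x c assume x: "x \<in> Sg"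
    have "Qf S ((R W ^^ Suc n) A x) c = (\<Sum>i<t. exp (W (scons i x)) * Qf S ((R W ^^ n) A (scons i x)) (pb i c))"
      by (simp add: ruelle_Qf)
    also have "\<dots> \<le> (\<Sum>i<t. exp (W (scons i x)) * (a * Qf S ((R W ^^ n) B (scons i x)) (pb i c)))"
      using Suc.IH x scons_Sigma by (intro sum_mono mult_left_mono) auto
    also have "\<dots> = a * Qf S ((R W ^^ Suc n) B x) c"
      by (simp add: ruelle_Qf sum_distrib_left mult_ac)
    finally show "Qf S ((R W ^^ Suc n) A x) c \<le> a * Qf S ((R W ^^ Suc n) B x) c" .
  qed
qed

lemma Rn_mono':
  assumes "\<forall>y\<in>Sg. \<forall>c. a * Qf S (B y) c \<le> Qf S (A y) c"
  shows "\<forall>x\<in>Sg. \<forall>c. a * Qf S ((R W ^^ n) B x) c \<le> Qf S ((R W ^^ n) A x) c"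
proof (induction n)
  case 0 thus ?case using assms by simp
next
  case (Suc n)
  show ?case
  proof (intro ballI allI)
    fix x c assume x: "x \<in> Sg"
    have "a * Qf S ((R W ^^ Suc n) B x) c = (\<Sum>i<t. exp (W (scons i x)) * (a * Qf S ((R W ^^ n) B (scons i x)) (pb i c)))"
      by (simp add: ruelle_Qf sum_distrib_left mult_ac)
    also have "\<dots> \<le> (\<Sum>i<t. exp (W (scons i x)) * Qf S ((R W ^^ n) A (scons i x)) (pb i c))"
      using Suc.IH x scons_Sigma by (intro sum_mono mult_left_mono) auto
    also have "\<dots> = Qf S ((R W ^^ Suc n) A x) c"
      by (simp add: ruelle_Qf)
    finally show "a * Qf S ((R W ^^ Suc n) B x) c \<le> Qf S ((R W ^^ Suc n) A x) c" .
  qed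
qed

definition "Id0 = (\<lambda>(x::nat\<Rightarrow>nat) (I::'n set) (J::'n set). if I = J then 1 else (0::real))"

lemma Qf_Id0: "Qf S (Id0 x) c = nsq S c"
  unfolding Id0_def by (simp add: Qf_Id)

lemma trq_mono:
  assumes "\<forall>c. Qf S P c \<le> a * Qf S P' c"
  shows "trq S P \<le> a * trq S P'"
proof -
  have "trq S P = (\<Sum>I\<in>S. Qf S P (ev I))" by (simp add: trq_Qf)
  also have "\<dots> \<le> (\<Sum>I\<in>S. a * Qf S P' (ev I))" using assms by (intro sum_mono) auto
  also have "\<dots> = a * trq S P'" by (simp add: trq_Qf sum_distrib_left)
  finally show ?thesis .
qed

lemma trq_mono':
  assumes "\<forall>c. a * Qf S P' c \<le> Qf S P c"
  shows "a * trq S P' \<le> trq S P"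
proof -
  have "a * trq S P' = (\<Sum>I\<in>S. a * Qf S P' (ev I))" by (simp add: trq_Qf sum_distrib_left)
  also have "\<dots> \<le> (\<Sum>I\<in>S. Qf S P (ev I))" using assms by (intro sum_mono) auto
  also have "\<dots> = trq S P" by (simp add: trq_Qf)
  finally show ?thesis .
qed

lemma trq_Id0: "trq S (Id0 x) = real (card S)"
  by (simp add: trq_def Id0_def)

end

locale hold = sett t \<gamma> \<alpha> \<psi> q
  for t :: nat and \<gamma> \<alpha> :: real
    and \<psi> :: "nat \<Rightarrow> real^('n::{finite,linorder}) \<Rightarrow> real^('n::{finite,linorder})"
    and q :: nat +
  fixes W :: "(nat \<Rightarrow> nat) \<Rightarrow> real" and CW :: real
  assumes CW: "0 \<le> CW"
    and Wh: "\<forall>x\<in>Sigma_sp t. \<forall>y\<in>Sigma_sp t. \<bar>W x - W y\<bar> \<le> CW * dgam \<gamma> x y powr \<alpha>"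
begin

definition "Kc = CW / (1 - \<gamma> powr \<alpha>)"

lemma Kc_nonneg: "0 \<le> Kc" using CW gpow by (simp add: Kc_def)

lemma Kc_ineq: "(CW + Kc) * \<gamma> powr \<alpha> \<le> Kc"
proof -
  have "Kc * (1 - \<gamma> powr \<alpha>) = CW" using gpow by (simp add: Kc_def)
  hence "Kc = CW + Kc * \<gamma> powr \<alpha>" by (simp add: algebra_simps)
  moreover have "CW * \<gamma> powr \<alpha> \<le> CW" using CW gpow by (simp add: mult_left_le)
  ultimately show ?thesis by (simp add: algebra_simps)
qed

definition cone :: "((nat \<Rightarrow> nat) \<Rightarrow> ('n set \<Rightarrow> 'n set \<Rightarrow> real)) \<Rightarrow> bool" where
  "cone A \<longleftrightarrow> (\<forall>x\<in>Sg. symm S (A x) \<and> psd S (A x)) \<and>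
     (\<forall>x\<in>Sg. \<forall>y\<in>Sg. \<forall>c. Qf S (A x) c \<le> exp (Kc * dgam \<gamma> x y powr \<alpha>) * Qf S (A y) c)"

definition "Wmin = W x0 - CW"

lemma W_lower: "y \<in> Sg \<Longrightarrow> Wmin \<le> W y"
proof -
  assume y: "y \<in> Sg"
  have "\<bar>W x0 - W y\<bar> \<le> CW * dgam \<gamma> x0 y powr \<alpha>" using Wh x0S y by blast
  also have "\<dots> \<le> CW" using CW dpow_le1[of x0 y] by (simp add: mult_left_le)
  finally show ?thesis unfolding Wmin_def by simp
qed

lemma W_scons: "x \<in> Sg \<Longrightarrow> y \<in> Sg \<Longrightarrow> i < t \<Longrightarrow>
   W (scons i x) \<le> W (scons i y) + CW * \<gamma> powr \<alpha> * dgam \<gamma> x y powr \<alpha>"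
proof -
  assume a: "x \<in> Sg" "y \<in> Sg" "i < t"
  have "\<bar>W (scons i x) - W (scons i y)\<bar> \<le> CW * dgam \<gamma> (scons i x) (scons i y) powr \<alpha>"
    using Wh a scons_Sigma by blast
  thus ?thesis by (simp add: dpow_scons mult_ac)
qed

lemma cone_R: assumes "cone A" shows "cone (R W A)"
  unfolding cone_def
proof (intro conjI ballI allI)
  fix x assume x: "x \<in> Sg"
  have ix: "i < t \<Longrightarrow> scons i x \<in> Sg" for i using x scons_Sigma by blast
  show "symm S (R W A x)" using assms ix by (intro ruelle_symm) (auto simp: cone_def)
  show "psd S (R W A x)" unfolding psd_def
    using assms ix by (auto simp: ruelle_Qf cone_def psd_def intro!: sum_nonneg)
next
  fix x y c assume x: "x \<in> Sg" and y: "y \<in> Sg"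
  define d where "d = dgam \<gamma> x y powr \<alpha>"
  have d0: "0 \<le> d" by (simp add: d_def)
  have "Qf S (R W A x) c = (\<Sum>i<t. exp (W (scons i x)) * Qf S (A (scons i x)) (pb i c))"
    by (simp add: ruelle_Qf)
  also have "\<dots> \<le> (\<Sum>i<t. exp ((CW + Kc) * \<gamma> powr \<alpha> * d) * (exp (W (scons i y)) * Qf S (A (scons i y)) (pb i c)))"
  proof (intro sum_mono)
    fix i assume "i \<in> {..<t}"
    hence i: "scons i x \<in> Sg" "scons i y \<in> Sg" "i < t" using x y scons_Sigma by auto
    have e1: "exp (W (scons i x)) \<le> exp (CW * \<gamma> powr \<alpha> * d) * exp (W (scons i y))"
      using W_scons[OF x y i(3)] by (simp add: d_def exp_add[symmetric] add.commute)
    have "Qf S (A (scons i x)) (pb i c) \<le> exp (Kc * dgam \<gamma> (scons i x) (scons i y) powr \<alpha>) * Qf S (A (scons i y)) (pb i c)"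
      using assms i unfolding cone_def by blast
    hence e2: "Qf S (A (scons i x)) (pb i c) \<le> exp (Kc * \<gamma> powr \<alpha> * d) * Qf S (A (scons i y)) (pb i c)"
      by (simp add: dpow_scons d_def mult_ac)
    have nn: "0 \<le> Qf S (A (scons i y)) (pb i c)" "0 \<le> Qf S (A (scons i x)) (pb i c)"
      using assms i by (auto simp: cone_def psd_def)
    have "exp (W (scons i x)) * Qf S (A (scons i x)) (pb i c) \<le>
       (exp (CW * \<gamma> powr \<alpha> * d) * exp (W (scons i y))) * (exp (Kc * \<gamma> powr \<alpha> * d) * Qf S (A (scons i y)) (pb i c))"
      using e1 e2 nn by (intro mult_mono) auto
    also have "\<dots> = exp ((CW + Kc) * \<gamma> powr \<alpha> * d) * (exp (W (scons i y)) * Qf S (A (scons i y)) (pb i c))"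
      by (simp add: algebra_simps exp_add[symmetric])
    finally show "exp (W (scons i x)) * Qf S (A (scons i x)) (pb i c) \<le>
       exp ((CW + Kc) * \<gamma> powr \<alpha> * d) * (exp (W (scons i y)) * Qf S (A (scons i y)) (pb i c))" .
  qed
  also have "\<dots> = exp ((CW + Kc) * \<gamma> powr \<alpha> * d) * Qf S (R W A y) c"
    by (simp add: ruelle_Qf sum_distrib_left)
  also have "\<dots> \<le> exp (Kc * d) * Qf S (R W A y) c"
  proof (intro mult_right_mono)
    show "exp ((CW + Kc) * \<gamma> powr \<alpha> * d) \<le> exp (Kc * d)"
      using Kc_ineq d0 by (simp add: mult_right_mono)
    show "0 \<le> Qf S (R W A y) c" using assms y scons_Sigma
      by (auto simp: ruelle_Qf cone_def psd_def intro!: sum_nonneg)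
  qed
  finally show "Qf S (R W A x) c \<le> exp (Kc * dgam \<gamma> x y powr \<alpha>) * Qf S (R W A y) c"
    by (simp add: d_def)
qed

lemma cone_Id0: "cone Id0"
  unfolding cone_def
proof (intro conjI ballI allI)
  fix x assume "x \<in> Sg"
  show "symm S (Id0 x)" by (auto simp: symm_def Id0_def)
  show "psd S (Id0 x)" by (simp add: psd_def Qf_Id0 nsq_nonneg)
next
  fix x y c
  have "1 \<le> exp (Kc * dgam \<gamma> x y powr \<alpha>)" using Kc_nonneg by simp
  thus "Qf S (Id0 x) c \<le> exp (Kc * dgam \<gamma> x y powr \<alpha>) * Qf S (Id0 y) c"
    using nsq_nonneg[of S c] by (simp add: Qf_Id0 mult_le_cancel_right1)
qed

lemma cone_x0:
  assumes "cone A" "x \<in> Sg"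
  shows "Qf S (A x) c \<le> exp Kc * Qf S (A x0) c" "Qf S (A x0) c \<le> exp Kc * Qf S (A x) c"
proof -
  have nn: "0 \<le> Qf S (A x0) c" "0 \<le> Qf S (A x) c" using assms x0S by (auto simp: cone_def psd_def)
  have "exp (Kc * dgam \<gamma> x x0 powr \<alpha>) \<le> exp Kc" "exp (Kc * dgam \<gamma> x0 x powr \<alpha>) \<le> exp Kc"
    using Kc_nonneg dpow_le1 by (auto simp: mult_left_le)
  moreover have "Qf S (A x) c \<le> exp (Kc * dgam \<gamma> x x0 powr \<alpha>) * Qf S (A x0) c"
    "Qf S (A x0) c \<le> exp (Kc * dgam \<gamma> x0 x powr \<alpha>) * Qf S (A x) c"
    using assms x0S unfolding cone_def by blast+
  ultimately show "Qf S (A x) c \<le> exp Kc * Qf S (A x0) c" "Qf S (A x0) c \<le> exp Kc * Qf S (A x) c"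
    using nn by (meson mult_right_mono order_trans)+
qed

lemma cone_upper:
  assumes "cone A" "x \<in> Sg"
  shows "Qf S (A x) c \<le> exp Kc * real (card S) * trq S (A x0) * nsq S c"
proof -
  have "Qf S (A x0) c \<le> real (card S) * trq S (A x0) * nsq S c"
    using assms x0S by (intro Qf_le_tr) (auto simp: cone_def)
  hence "exp Kc * Qf S (A x0) c \<le> exp Kc * (real (card S) * trq S (A x0) * nsq S c)"
    by (intro mult_left_mono) auto
  hence "Qf S (A x) c \<le> exp Kc * (real (card S) * trq S (A x0) * nsq S c)"
    using cone_x0(1)[OF assms, of c] by linarith
  thus ?thesis by (simp add: mult_ac)
qed

definition "c0 = exp (Wmin - Kc) * (SOME g. g > 0 \<and> (\<forall>c e :: 'n set \<Rightarrow> real. \<exists>i\<in>{..<t}.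
       \<bar>\<Sum>I\<in>qidx q. pullback (Dlin (\<psi> i)) q c I * e I\<bar> \<ge> g * sqrt (nsq (qidx q) c) * sqrt (nsq (qidx q) e)))^2 / real (card S)"

lemma c0_pos: "c0 > 0"
proof -
  let ?g = "SOME g. g > 0 \<and> (\<forall>c e :: 'n set \<Rightarrow> real. \<exists>i\<in>{..<t}.
       \<bar>\<Sum>I\<in>qidx q. pullback (Dlin (\<psi> i)) q c I * e I\<bar> \<ge> g * sqrt (nsq (qidx q) c) * sqrt (nsq (qidx q) e))"
  have "?g > 0" using someI_ex[OF ND] by blast
  thus ?thesis using Npos by (simp add: c0_def)
qed

lemma doeblin_R:
  assumes "cone A" "x \<in> Sg"
  shows "c0 * trq S (A x0) * nsq S c \<le> Qf S (R W A x) c"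
proof -
  let ?g = "SOME g. g > 0 \<and> (\<forall>c e :: 'n set \<Rightarrow> real. \<exists>i\<in>{..<t}.
       \<bar>\<Sum>I\<in>qidx q. pullback (Dlin (\<psi> i)) q c I * e I\<bar> \<ge> g * sqrt (nsq (qidx q) c) * sqrt (nsq (qidx q) e))"
  have g: "?g > 0 \<and> (\<forall>c e :: 'n set \<Rightarrow> real. \<exists>i\<in>{..<t}.
       \<bar>\<Sum>I\<in>qidx q. pullback (Dlin (\<psi> i)) q c I * e I\<bar> \<ge> ?g * sqrt (nsq (qidx q) c) * sqrt (nsq (qidx q) e))"
    using someI_ex[OF ND] .
  have A0: "symm S (A x0)" "psd S (A x0)" using assms x0S by (auto simp: cone_def)
  have D: "?g^2 / real (card S) * trq S (A x0) * nsq S c \<le> (\<Sum>i<t. Qf S (A x0) (pb i c))"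
    using doeblin[of S "{..<t}" "A x0" ?g pb c] qne A0 g by auto
  have "c0 * trq S (A x0) * nsq S c = exp (Wmin - Kc) * (?g^2 / real (card S) * trq S (A x0) * nsq S c)"
    by (simp add: c0_def)
  also have "\<dots> \<le> exp (Wmin - Kc) * (\<Sum>i<t. Qf S (A x0) (pb i c))"
    using D by (intro mult_left_mono) auto
  also have "\<dots> = (\<Sum>i<t. exp Wmin * (exp (-Kc) * Qf S (A x0) (pb i c)))"
  proof -
    have "exp (Wmin - Kc) = exp Wmin * exp (-Kc)" by (simp add: exp_add[symmetric])
    thus ?thesis by (simp add: sum_distrib_left mult_ac)
  qed
  also have "\<dots> \<le> (\<Sum>i<t. exp (W (scons i x)) * Qf S (A (scons i x)) (pb i c))"
  proof (intro sum_mono)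
    fix i assume "i \<in> {..<t}"
    hence i: "scons i x \<in> Sg" using assms scons_Sigma by auto
    have "Qf S (A x0) (pb i c) \<le> exp Kc * Qf S (A (scons i x)) (pb i c)" using cone_x0(2)[OF assms(1) i] .
    hence "exp (-Kc) * Qf S (A x0) (pb i c) \<le> exp (-Kc) * (exp Kc * Qf S (A (scons i x)) (pb i c))"
      by (intro mult_left_mono) auto
    hence "exp (-Kc) * Qf S (A x0) (pb i c) \<le> Qf S (A (scons i x)) (pb i c)"
      by (simp add: mult.assoc[symmetric] exp_add[symmetric])
    moreover have "0 \<le> exp (-Kc) * Qf S (A x0) (pb i c)" using A0 by (simp add: psd_def)
    moreover have "exp Wmin \<le> exp (W (scons i x))" using W_lower[OF i] by simp
    ultimately show "exp Wmin * (exp (-Kc) * Qf S (A x0) (pb i c)) \<le> exp (W (scons i x)) * Qf S (A (scons i x)) (pb i c)"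
      by (intro mult_mono) auto
  qed
  also have "\<dots> = Qf S (R W A x) c" by (simp add: ruelle_Qf)
  finally show ?thesis .
qed

end


context hold begin

definition "u n = (R W ^^ n) Id0"

lemma u_Suc: "u (Suc n) = R W (u n)" by (simp add: u_def)
lemma u_0: "u 0 = Id0" by (simp add: u_def)

lemma cone_u: "cone (u n)"
  by (induction n) (simp_all add: u_0 u_Suc cone_Id0 cone_R)

lemma u_add: "u (n + m) = (R W ^^ n) (u m)"
  by (simp add: u_def funpow_add)

definition "s n = trq S (u n x0)"

lemma Nge1: "1 \<le> real (card S)"
proof -
  have "card S \<ge> 1" using qne by (simp add: Suc_le_eq card_gt_0_iff)
  thus ?thesis by simp
qed

lemma eKN: "1 \<le> exp Kc * real (card S)"
proof -
  have "1 \<le> exp Kc" using Kc_nonneg by simp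
  thus ?thesis using mult_mono[of 1 "exp Kc" 1 "real (card S)"] Nge1 by simp
qed

lemma eKNN: "1 \<le> exp Kc * real (card S) * real (card S)"
  using mult_mono[of 1 "exp Kc * real (card S)" 1 "real (card S)"] Nge1 eKN by simp

lemma s0: "s 0 = real (card S)" by (simp add: s_def u_0 trq_Id0)

lemma S1: "s (n + m) \<le> exp Kc * real (card S) * s m * s n"
proof -
  have "\<forall>y\<in>Sg. \<forall>c. Qf S (u m y) c \<le> (exp Kc * real (card S) * s m) * Qf S (Id0 y) c"
    using cone_upper[OF cone_u] by (simp add: Qf_Id0 s_def mult_ac)
  from Rn_mono[OF this, of n]
  have "\<forall>c. Qf S (u (n + m) x0) c \<le> (exp Kc * real (card S) * s m) * Qf S (u n x0) c"
    using x0S by (simp add: u_add u_def[of n])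
  thus ?thesis unfolding s_def[of "n+m"] s_def[of n] by (intro trq_mono) auto
qed

lemma S2: "c0 * s m * s n \<le> s (n + Suc m)"
proof -
  have "\<forall>y\<in>Sg. \<forall>c. (c0 * s m) * Qf S (Id0 y) c \<le> Qf S (u (Suc m) y) c"
    using doeblin_R[OF cone_u] by (simp add: Qf_Id0 s_def u_Suc mult_ac)
  from Rn_mono'[OF this, of n] x0S
  have X: "\<forall>c. (c0 * s m) * Qf S ((R W ^^ n) Id0 x0) c \<le> Qf S ((R W ^^ n) (u (Suc m)) x0) c" by blast
  have e: "(R W ^^ n) Id0 = u n" "(R W ^^ n) (u (Suc m)) = u (n + Suc m)"
    by (simp_all only: u_def funpow_add comp_def)
  from X have "\<forall>c. (c0 * s m) * Qf S (u n x0) c \<le> Qf S (u (n + Suc m) x0) c" unfolding e .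
  thus ?thesis unfolding s_def[of "n+Suc m"] s_def[of n] by (rule trq_mono')
qed

lemma s_step: "c0 * real (card S) * s m \<le> s (Suc m)"
  using S2[of m 0] by (simp add: s0 mult_ac)

lemma s_pos: "s n > 0"
proof (induction n)
  case 0 thus ?case using Npos by (simp add: s0)
next
  case (Suc n)
  have "0 < c0 * real (card S) * s n" using c0_pos Npos Suc by simp
  thus ?case using s_step[of n] by linarith
qed

definition "aa n = exp Kc * real (card S) * s n"
definition "bb n = c0 * s (n - 1)"

lemma aa_pos: "aa n > 0" using Npos s_pos by (simp add: aa_def)
lemma bb_pos: "bb n > 0" using c0_pos s_pos by (simp add: bb_def)

lemma aa_sub: "aa (n + m) \<le> aa n * aa m"
proof -
  have "aa (n + m) \<le> exp Kc * real (card S) * (exp Kc * real (card S) * s m * s n)"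
    unfolding aa_def using S1 Npos by (intro mult_left_mono) auto
  thus ?thesis by (simp add: aa_def mult_ac)
qed

lemma aa_pow: "aa (m * Suc n) \<le> (aa m)^(Suc n)"
proof (induction n)
  case 0
  show ?case by simp
next
  case (Suc n)
  have "aa (m * Suc (Suc n)) = aa (m + m * Suc n)" by simp
  also have "\<dots> \<le> aa m * aa (m * Suc n)" by (rule aa_sub)
  also have "\<dots> \<le> aa m * (aa m)^(Suc n)" using Suc aa_pos[of m] by (intro mult_left_mono) auto
  finally show ?case by simp
qed

lemma bb_super: "1 \<le> n \<Longrightarrow> 1 \<le> m \<Longrightarrow> bb n * bb m \<le> bb (n + m)"
proof -
  assume "1 \<le> n" "1 \<le> m"
  then obtain n' m' where nm: "n = Suc n'" "m = Suc m'" by (metis One_nat_def Suc_le_D)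
  have "bb n * bb m = c0 * (c0 * s m' * s n')" by (simp add: bb_def nm mult_ac)
  also have "\<dots> \<le> c0 * s (n' + Suc m')" using S2 c0_pos by (intro mult_left_mono) auto
  also have "\<dots> = bb (n + m)" by (simp add: bb_def nm)
  finally show ?thesis .
qed

lemma bb_pow: "1 \<le> n \<Longrightarrow> (bb n)^(Suc k) \<le> bb (n * Suc k)"
proof (induction k)
  case 0 thus ?case by simp
next
  case (Suc k)
  have "(bb n)^(Suc (Suc k)) = bb n * (bb n)^(Suc k)" by simp
  also have "\<dots> \<le> bb n * bb (n * Suc k)" using Suc bb_pos[of n] by (intro mult_left_mono) auto
  also have "\<dots> \<le> bb (n + n * Suc k)" using Suc.prems by (intro bb_super) auto
  finally show ?case by (simp add: add.commute)
qed

lemma bb_le_aa: "1 \<le> k \<Longrightarrow> bb k \<le> aa k"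
proof -
  assume k: "1 \<le> k"
  then obtain k' where k': "k = Suc k'" by (metis One_nat_def Suc_le_D)
  have "bb k * real (card S) \<le> s k" using s_step[of k'] by (simp add: bb_def k' mult_ac)
  moreover have "bb k \<le> bb k * real (card S)" using Nge1 bb_pos[of k] by (simp add: mult_le_cancel_left1)
  ultimately have "bb k \<le> s k" by linarith
  also have "s k \<le> exp Kc * real (card S) * s k"
  proof -
    have "1 \<le> exp Kc * real (card S)" by (rule eKN)
    thus ?thesis using s_pos[of k] by (simp add: mult_le_cancel_right1)
  qed
  finally show ?thesis by (simp add: aa_def)
qed

lemma bb_aa_pow: "1 \<le> n \<Longrightarrow> 1 \<le> m \<Longrightarrow> (bb n)^m \<le> (aa m)^n"
proof -
  assume n: "1 \<le> n" and m: "1 \<le> m"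
  then obtain m' where m': "m = Suc m'" by (metis One_nat_def Suc_le_D)
  obtain n' where n': "n = Suc n'" using n by (metis One_nat_def Suc_le_D)
  have "(bb n)^m \<le> bb (n * m)" using bb_pow[OF n] m' by simp
  also have "\<dots> \<le> aa (n * m)" using n m by (intro bb_le_aa) (simp add: Suc_le_eq)
  also have "\<dots> = aa (m * n)" by (simp add: mult.commute)
  also have "\<dots> \<le> (aa m)^n" using aa_pow[of m n'] by (simp add: n')
  finally show ?thesis .
qed

definition "lam = Inf ((\<lambda>m. root m (aa m)) ` {1..})"

lemma root_bb_le_lam: "1 \<le> n \<Longrightarrow> root n (bb n) \<le> lam"
  unfolding lam_def
proof (rule cInf_greatest)
  show "(\<lambda>m. root m (aa m)) ` {1..} \<noteq> {}" by auto
next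
  fix x assume n: "1 \<le> n" and "x \<in> (\<lambda>m. root m (aa m)) ` {1..}"
  then obtain m where m: "1 \<le> m" "x = root m (aa m)" by auto
  have "root n (bb n) = root (n * m) ((bb n)^m)"
    using m n bb_pos[of n] by (simp add: real_root_mult_exp real_root_power_cancel)
  also have "\<dots> \<le> root (n * m) ((aa m)^n)"
    using n m bb_aa_pow[OF n m(1)] by (intro real_root_le_mono) auto
  also have "\<dots> = root m (aa m)"
    using m n aa_pos[of m] by (simp add: real_root_mult_exp real_root_power_cancel mult.commute[of n m])
  finally show "root n (bb n) \<le> x" using m by simp
qed

lemma lam_le_root: "1 \<le> m \<Longrightarrow> lam \<le> root m (aa m)"
  unfolding lam_def
proof (rule cInf_lower)
  show "1 \<le> m \<Longrightarrow> root m (aa m) \<in> (\<lambda>m. root m (aa m)) ` {1..}" by auto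
  show "bdd_below ((\<lambda>m. root m (aa m)) ` {1..})"
    using aa_pos by (intro bdd_belowI[of _ 0]) (auto intro: real_root_ge_zero less_imp_le)
qed

lemma lam_pos: "lam > 0"
proof -
  have "root 1 (bb 1) \<le> lam" by (rule root_bb_le_lam) simp
  thus ?thesis using bb_pos[of 1] by simp
qed

lemma E1: "c0 * s k \<le> lam^(Suc k)"
proof -
  have r: "root (Suc k) (bb (Suc k)) \<le> lam" by (rule root_bb_le_lam) simp
  have "(root (Suc k) (bb (Suc k)))^(Suc k) = bb (Suc k)"
    by (rule real_root_pow_pos2) (use bb_pos[of "Suc k"] in auto)
  hence "bb (Suc k) = (root (Suc k) (bb (Suc k)))^(Suc k)" by simp
  also have "\<dots> \<le> lam^(Suc k)" using r bb_pos[of "Suc k"] by (intro power_mono) (auto intro: real_root_ge_zero less_imp_le)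
  finally show ?thesis by (simp add: bb_def)
qed

lemma E2: "lam^k \<le> exp Kc * real (card S) * s k"
proof (cases "k = 0")
  case True
  show ?thesis using True eKNN by (simp add: s0)
next
  case False
  hence k: "1 \<le> k" by simp
  have "lam^k \<le> (root k (aa k))^k" using lam_le_root[OF k] lam_pos by (intro power_mono) auto
  also have "\<dots> = aa k" using k aa_pos[of k] by simp
  finally show ?thesis by (simp add: aa_def)
qed

end


context hold begin

definition "hh n x = (\<lambda>I J. (1 / real n) * (\<Sum>k<n. (1 / lam^k) * u k x I J))"

lemma Qf_hh: "Qf S (hh n x) c = (1 / real n) * (\<Sum>k<n. (1 / lam^k) * Qf S (u k x) c)"
proof -
  have "Qf S (hh n x) c = (1 / real n) * Qf S (\<lambda>I J. \<Sum>k<n. (1 / lam^k) * u k x I J) c"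
    unfolding hh_def by (rule Qf_scale)
  also have "Qf S (\<lambda>I J. \<Sum>k<n. (1 / lam^k) * u k x I J) c = (\<Sum>k<n. Qf S (\<lambda>I J. (1 / lam^k) * u k x I J) c)"
    by (rule Qf_sum)
  also have "\<dots> = (\<Sum>k<n. (1 / lam^k) * Qf S (u k x) c)" by (intro sum.cong refl) (rule Qf_scale)
  finally show ?thesis .
qed

lemma cone_hh: "cone (hh n)"
  unfolding cone_def
proof (intro conjI ballI allI)
  fix x assume x: "x \<in> Sg"
  have s: "symm S (u k x)" for k using cone_u x by (auto simp: cone_def)
  show "symm S (hh n x)" using s unfolding symm_def hh_def by (auto intro!: sum.cong)
  have p: "0 \<le> Qf S (u k x) c" for k c using cone_u x by (auto simp: cone_def psd_def)
  show "psd S (hh n x)" unfolding psd_def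
  proof
    fix c
    have "0 \<le> (\<Sum>k<n. (1 / lam^k) * Qf S (u k x) c)" using p lam_pos
      by (intro sum_nonneg mult_nonneg_nonneg) auto
    thus "0 \<le> Qf S (hh n x) c" unfolding Qf_hh by (intro mult_nonneg_nonneg) auto
  qed
next
  fix x y c assume x: "x \<in> Sg" and y: "y \<in> Sg"
  let ?E = "exp (Kc * dgam \<gamma> x y powr \<alpha>)"
  have "Qf S (hh n x) c = (1 / real n) * (\<Sum>k<n. (1 / lam^k) * Qf S (u k x) c)" by (rule Qf_hh)
  also have "\<dots> \<le> (1 / real n) * (\<Sum>k<n. (1 / lam^k) * (?E * Qf S (u k y) c))"
    using cone_u x y lam_pos by (intro mult_left_mono sum_mono) (auto simp: cone_def)
  also have "\<dots> = ?E * Qf S (hh n y) c" by (simp add: Qf_hh sum_distrib_left mult_ac)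
  finally show "Qf S (hh n x) c \<le> ?E * Qf S (hh n y) c" .
qed

lemma R_hh: "Qf S (R W (hh n) x) c = (1 / real n) * (\<Sum>k<n. (1 / lam^k) * Qf S (u (Suc k) x) c)"
proof -
  have "Qf S (R W (hh n) x) c = (\<Sum>i<t. exp (W (scons i x)) * ((1 / real n) * (\<Sum>k<n. (1 / lam^k) * Qf S (u k (scons i x)) (pb i c))))"
    by (simp add: ruelle_Qf Qf_hh)
  also have "\<dots> = (1 / real n) * (\<Sum>k<n. (1 / lam^k) * (\<Sum>i<t. exp (W (scons i x)) * Qf S (u k (scons i x)) (pb i c)))"
    by (simp add: sum_distrib_left mult_ac sum.swap[of _ "{..<t}"])
  also have "\<dots> = (1 / real n) * (\<Sum>k<n. (1 / lam^k) * Qf S (u (Suc k) x) c)"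
    by (simp add: u_Suc ruelle_Qf)
  finally show ?thesis .
qed

definition "Dc = lam * (exp Kc * real (card S) * lam / c0 + 1)"

lemma Dc_nonneg: "0 \<le> Dc" using lam_pos c0_pos by (simp add: Dc_def)

lemma u_bound: "x \<in> Sg \<Longrightarrow> Qf S (u k x) c / lam^k \<le> exp Kc * real (card S) * lam / c0 * nsq S c"
proof -
  assume x: "x \<in> Sg"
  have "Qf S (u k x) c \<le> exp Kc * real (card S) * s k * nsq S c"
    using cone_upper[OF cone_u x] by (simp add: s_def)
  also have "\<dots> \<le> exp Kc * real (card S) * (lam^(Suc k) / c0) * nsq S c"
    using E1[of k] c0_pos nsq_nonneg[of S c] Npos
    by (intro mult_right_mono mult_left_mono) (auto simp: field_simps)
  finally have "Qf S (u k x) c \<le> exp Kc * real (card S) * (lam^(Suc k) / c0) * nsq S c" .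
  hence "Qf S (u k x) c / lam^k \<le> exp Kc * real (card S) * (lam^(Suc k) / c0) * nsq S c / lam^k"
    using lam_pos by (intro divide_right_mono) auto
  also have "\<dots> = exp Kc * real (card S) * lam / c0 * nsq S c" using lam_pos by (simp add: field_simps)
  finally show ?thesis .
qed

lemma defect:
  assumes x: "x \<in> Sg" and n: "n \<ge> 1"
  shows "\<bar>Qf S (R W (hh n) x) c - lam * Qf S (hh n x) c\<bar> \<le> Dc / real n * nsq S c"
proof -
  define qq where "qq k = Qf S (u k x) c / lam^k" for k
  have e: "(1 / lam^k) * Qf S (u (Suc k) x) c = lam * qq (Suc k)" for k
    using lam_pos by (simp add: qq_def field_simps)
  have "Qf S (R W (hh n) x) c = (1 / real n) * (\<Sum>k<n. lam * qq (Suc k))"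
    unfolding R_hh e by simp
  moreover have "lam * Qf S (hh n x) c = (1 / real n) * (\<Sum>k<n. lam * qq k)"
    unfolding Qf_hh qq_def by (simp add: sum_distrib_left field_simps)
  ultimately have "Qf S (R W (hh n) x) c - lam * Qf S (hh n x) c = (1 / real n) * (\<Sum>k<n. lam * qq (Suc k)) - (1 / real n) * (\<Sum>k<n. lam * qq k)"
    by simp
  also have "\<dots> = (1 / real n) * ((\<Sum>k<n. lam * qq (Suc k)) - (\<Sum>k<n. lam * qq k))"
    by (simp only: right_diff_distrib)
  also have "(\<Sum>k<n. lam * qq (Suc k)) - (\<Sum>k<n. lam * qq k) = lam * (\<Sum>k<n. qq (Suc k) - qq k)"
    by (simp add: sum_subtractf right_diff_distrib sum_distrib_left)
  also have "(1 / real n) * (lam * (\<Sum>k<n. qq (Suc k) - qq k)) = (lam / real n) * (\<Sum>k<n. qq (Suc k) - qq k)"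
    by simp
  also have "\<dots> = (lam / real n) * (qq n - qq 0)" by (simp add: sum_lessThan_telescope)
  finally have eq: "Qf S (R W (hh n) x) c - lam * Qf S (hh n x) c = (lam / real n) * (qq n - qq 0)" .
  have q0: "qq 0 = nsq S c" by (simp add: qq_def u_0 Qf_Id0)
  have qn: "0 \<le> qq n" using cone_u x lam_pos by (auto simp: qq_def cone_def psd_def)
  have qn2: "qq n \<le> exp Kc * real (card S) * lam / c0 * nsq S c" unfolding qq_def by (rule u_bound[OF x])
  have "\<bar>qq n - qq 0\<bar> \<le> (exp Kc * real (card S) * lam / c0 + 1) * nsq S c"
    using q0 qn qn2 nsq_nonneg[of S c] by (simp add: abs_le_iff algebra_simps)
  hence "\<bar>(lam / real n) * (qq n - qq 0)\<bar> \<le> (lam / real n) * ((exp Kc * real (card S) * lam / c0 + 1) * nsq S c)"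
  proof -
    have "\<bar>(lam / real n) * (qq n - qq 0)\<bar> = (lam / real n) * \<bar>qq n - qq 0\<bar>"
      using lam_pos n by (simp add: abs_mult)
    also have "\<dots> \<le> (lam / real n) * ((exp Kc * real (card S) * lam / c0 + 1) * nsq S c)"
      using lam_pos n \<open>\<bar>qq n - qq 0\<bar> \<le> _\<close> by (intro mult_left_mono) auto
    finally show ?thesis .
  qed
  thus ?thesis unfolding eq by (simp add: Dc_def field_simps)
qed

lemma trq_hh: "trq S (hh n x) = (1 / real n) * (\<Sum>k<n. (1 / lam^k) * trq S (u k x))"
  unfolding trq_def hh_def by (simp add: sum_distrib_left sum.swap[of _ S])

lemma trq_hh_lower: "n \<ge> 1 \<Longrightarrow> 1 / (exp Kc * real (card S)) \<le> trq S (hh n x0)"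
proof -
  assume n: "n \<ge> 1"
  have "(1 / real n) * (\<Sum>k<n. 1 / (exp Kc * real (card S))) \<le> (1 / real n) * (\<Sum>k<n. (1 / lam^k) * trq S (u k x0))"
  proof (intro mult_left_mono sum_mono)
    fix k
    have "lam^k \<le> exp Kc * real (card S) * s k" by (rule E2)
    thus "1 / (exp Kc * real (card S)) \<le> 1 / lam ^ k * trq S (u k x0)"
      using lam_pos s_pos[of k] Npos by (simp add: s_def field_simps)
  qed simp
  thus ?thesis using n by (simp add: trq_hh)
qed

lemma trq_hh_upper: "trq S (hh n x0) \<le> lam / c0"
proof (cases "n = 0")
  case True thus ?thesis using lam_pos c0_pos by (simp add: trq_hh)
next
  case False
  have "trq S (hh n x0) \<le> (1 / real n) * (\<Sum>k<n. lam / c0)"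
    unfolding trq_hh
  proof (intro mult_left_mono sum_mono)
    fix k
    have "c0 * s k \<le> lam^(Suc k)" by (rule E1)
    thus "1 / lam ^ k * trq S (u k x0) \<le> lam / c0"
      using lam_pos c0_pos by (simp add: s_def field_simps)
  qed simp
  thus ?thesis using False by simp
qed

definition "Bd = exp Kc * lam / c0"

lemma hh_entry_bound:
  assumes x: "x \<in> Sg" and IJ: "I \<in> S" "J \<in> S"
  shows "\<bar>hh n x I J\<bar> \<le> Bd"
proof -
  have c: "symm S (hh n x)" "psd S (hh n x)" using cone_hh x by (auto simp: cone_def)
  have "\<bar>hh n x I J\<bar> \<le> trq S (hh n x)" using entry_le_tr[OF _ c IJ] by simp
  also have "\<dots> \<le> exp Kc * trq S (hh n x0)"
    using cone_x0(1)[OF cone_hh x] by (intro trq_mono) auto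
  also have "\<dots> \<le> exp Kc * (lam / c0)" using trq_hh_upper by (intro mult_left_mono) auto
  finally show ?thesis by (simp add: Bd_def)
qed

end


lemma eps_eq: "(\<And>e. e > 0 \<Longrightarrow> \<bar>a - b\<bar> \<le> e) \<Longrightarrow> a = (b::real)"
proof (rule ccontr)
  assume h: "\<And>e. e > 0 \<Longrightarrow> \<bar>a - b\<bar> \<le> e" and "a \<noteq> b"
  hence "\<bar>a - b\<bar> > 0" by simp
  from h[of "\<bar>a - b\<bar> / 2"] this show False by simp
qed

context hold begin

lemma cone_cont:
  assumes A: "cone A" and x: "x \<in> Sg" and e: "e > 0"
  shows "\<exists>\<delta>>0. \<forall>y\<in>Sg. dgam \<gamma> x y < \<delta> \<longrightarrow> (\<forall>I\<in>S. \<forall>J\<in>S. \<bar>A y I J - A x I J\<bar> < e)"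
proof -
  define B2 where "B2 = exp Kc * real (card S) * trq S (A x0)"
  have B20: "0 \<le> B2" using A x0S tr_nonneg[of S "A x0"] by (auto simp: B2_def cone_def)
  have B2b: "z \<in> Sg \<Longrightarrow> Qf S (A z) c \<le> B2 * nsq S c" for z c using cone_upper[OF A] by (simp add: B2_def)
  define e1 where "e1 = e / (3 * B2 + 1)"
  have e1: "e1 > 0" using e B20 by (simp add: e1_def)
  have l1: "ln (1 + e1) > 0" using e1 by simp
  define \<delta> where "\<delta> = (ln (1 + e1) / (Kc + 1)) powr (1 / \<alpha>)"
  have \<delta>: "\<delta> > 0" using l1 Kc_nonneg by (simp add: \<delta>_def)
  have \<delta>a: "\<delta> powr \<alpha> = ln (1 + e1) / (Kc + 1)"
    using l1 Kc_nonneg alp by (simp add: \<delta>_def powr_powr)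
  show ?thesis
  proof (intro exI[of _ \<delta>] conjI \<delta> ballI impI)
    fix y I J assume y: "y \<in> Sg" and d: "dgam \<gamma> x y < \<delta>" and IJ: "I \<in> S" "J \<in> S"
    define E where "E = exp (Kc * dgam \<gamma> x y powr \<alpha>)"
    have "dgam \<gamma> x y powr \<alpha> \<le> \<delta> powr \<alpha>"
      using d alp dgam_nonneg[OF gam(1)] by (intro powr_mono2) auto
    hence "Kc * dgam \<gamma> x y powr \<alpha> \<le> Kc * (ln (1 + e1) / (Kc + 1))"
      using Kc_nonneg \<delta>a by (intro mult_left_mono) auto
    also have "\<dots> < ln (1 + e1)" using l1 Kc_nonneg by (simp add: field_simps)
    finally have "E < 1 + e1" unfolding E_def using e1
      by (metis exp_less_mono exp_ln add_pos_pos zero_less_one)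
    hence Ee: "E - 1 < e1" by simp
    have E1: "1 \<le> E" using Kc_nonneg by (simp add: E_def)
    define D where "D = (\<lambda>I J. A y I J - A x I J)"
    have QD: "Qf S D c = Qf S (A y) c - Qf S (A x) c" for c
      using Qf_lin[of S 1 "A y" "-1" "A x" c] by (simp add: D_def)
    have symD: "symm S D" using A x y by (auto simp: D_def symm_def cone_def)
    have bnd: "\<bar>Qf S D c\<bar> \<le> (E - 1) * B2 * nsq S c" for c
    proof -
      have "Qf S (A y) c \<le> exp (Kc * dgam \<gamma> y x powr \<alpha>) * Qf S (A x) c" using A x y unfolding cone_def by blast
      hence c1: "Qf S (A y) c \<le> E * Qf S (A x) c" using dgam_sym[of \<gamma> y x] by (simp add: E_def)
      have c2: "Qf S (A x) c \<le> E * Qf S (A y) c" using A x y by (simp add: E_def cone_def)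
      have p: "0 \<le> Qf S (A x) c" "0 \<le> Qf S (A y) c" using A x y by (auto simp: cone_def psd_def)
      have "(E - 1) * Qf S (A x) c \<le> (E - 1) * (B2 * nsq S c)" using B2b[OF x] E1 by (intro mult_left_mono) auto
      moreover have "(E - 1) * Qf S (A y) c \<le> (E - 1) * (B2 * nsq S c)" using B2b[OF y] E1 by (intro mult_left_mono) auto
      ultimately show ?thesis unfolding QD using c1 c2 by (simp add: abs_le_iff algebra_simps)
    qed
    have nev: "nsq S (ev K) = 1" if "K \<in> S" for K
    proof -
      have "nsq S (ev K) = (\<Sum>I\<in>S. if I = K then 1 else 0)"
        unfolding nsq_def by (intro sum.cong) (auto simp: ev_def)
      thus ?thesis using that by (simp add: sum.delta)
    qed
    have nev2: "nsq S (\<lambda>K. ev I K + 1 * ev J K) \<le> 4"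
    proof -
      have "nsq S (\<lambda>K. ev I K + 1 * ev J K) \<le> (\<Sum>K\<in>S. 2 * ((ev I K)^2 + (ev J K)^2))"
        unfolding nsq_def by (intro sum_mono) (auto simp: ev_def)
      also have "\<dots> = 2 * (nsq S (ev I) + nsq S (ev J))" by (simp add: nsq_def sum.distrib sum_distrib_left)
      finally show ?thesis using nev IJ by simp
    qed
    have "Qf S D (\<lambda>K. ev I K + 1 * ev J K) = Qf S D (ev I) + 2 * D I J + Qf S D (ev J)"
      using Qf_comb[OF symD, of "ev I" 1 "ev J"] Bf_ev[of S I J D] IJ by simp
    hence "2 * \<bar>D I J\<bar> \<le> \<bar>Qf S D (\<lambda>K. ev I K + 1 * ev J K)\<bar> + \<bar>Qf S D (ev I)\<bar> + \<bar>Qf S D (ev J)\<bar>" by linarith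
    also have "\<dots> \<le> (E - 1) * B2 * 4 + (E - 1) * B2 * 1 + (E - 1) * B2 * 1"
    proof -
      have z: "0 \<le> (E - 1) * B2" using E1 B20 by simp
      have q1: "\<bar>Qf S D (\<lambda>K. ev I K + 1 * ev J K)\<bar> \<le> (E - 1) * B2 * 4"
        using bnd[of "\<lambda>K. ev I K + 1 * ev J K"] mult_left_mono[OF nev2 z] by linarith
      have q2: "\<bar>Qf S D (ev I)\<bar> \<le> (E - 1) * B2 * 1" using bnd[of "ev I"] nev IJ by simp
      have q3: "\<bar>Qf S D (ev J)\<bar> \<le> (E - 1) * B2 * 1" using bnd[of "ev J"] nev IJ by simp
      show ?thesis using q1 q2 q3 by linarith
    qed
    finally have "\<bar>D I J\<bar> \<le> 3 * (E - 1) * B2" by (simp add: algebra_simps)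
    also have "\<dots> \<le> 3 * e1 * B2" using Ee B20 by (intro mult_right_mono) auto
    also have "\<dots> < e" using e B20 by (simp add: e1_def field_simps)
    finally show "\<bar>A y I J - A x I J\<bar> < e" by (simp add: D_def)
  qed
qed

definition "ff n z = (case z of (x, I, J) \<Rightarrow> if x \<in> Sg \<and> I \<in> S \<and> J \<in> S then hh (Suc n) x I J else 0)"

lemma Bd_pos: "0 < Bd" using lam_pos c0_pos by (simp add: Bd_def)

lemma ff_bound: "\<bar>ff n z\<bar> \<le> Bd"
  using hh_entry_bound Bd_pos by (auto simp: ff_def split: prod.split)

definition "H0 = (SOME H. \<forall>Z. finite Z \<longrightarrow> (\<forall>\<epsilon>>0. \<forall>N0. \<exists>n\<ge>N0. \<forall>z\<in>Z. \<bar>ff n z - H z\<bar> < \<epsilon>))"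

lemma H0: "\<forall>Z. finite Z \<longrightarrow> (\<forall>\<epsilon>>0. \<forall>N0. \<exists>n\<ge>N0. \<forall>z\<in>Z. \<bar>ff n z - H0 z\<bar> < \<epsilon>)"
  unfolding H0_def by (rule someI_ex[OF cluster_point[OF ff_bound]])

definition "HH x I J = (if I \<in> S \<and> J \<in> S then H0 (x, I, J) else 0)"

lemma approx:
  assumes "finite X" "X \<subseteq> Sg" "\<epsilon> > 0"
  shows "\<exists>n\<ge>N0. \<forall>x\<in>X. \<forall>I\<in>S. \<forall>J\<in>S. \<bar>hh (Suc n) x I J - HH x I J\<bar> < \<epsilon>"
proof -
  have "finite (X \<times> S \<times> S)" using assms by simp
  then obtain n where n: "n \<ge> N0" "\<forall>z\<in>X \<times> S \<times> S. \<bar>ff n z - H0 z\<bar> < \<epsilon>" using H0 assms(3) by blast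
  show ?thesis
  proof (intro exI[of _ n] conjI n(1) ballI)
    fix x I J assume "x \<in> X" "I \<in> S" "J \<in> S"
    thus "\<bar>hh (Suc n) x I J - HH x I J\<bar> < \<epsilon>" using n(2) assms(2) by (force simp: ff_def HH_def)
  qed
qed

lemma approxQ:
  assumes "\<forall>x\<in>X. \<forall>I\<in>S. \<forall>J\<in>S. \<bar>hh (Suc n) x I J - HH x I J\<bar> < \<epsilon>" "x \<in> X"
  shows "\<bar>Qf S (hh (Suc n) x) c - Qf S (HH x) c\<bar> \<le> \<epsilon> * (\<Sum>I\<in>S. \<bar>c I\<bar>)^2"
  using assms by (intro Qf_diff) (auto intro: less_imp_le)

lemma HH_symm: "x \<in> Sg \<Longrightarrow> symm S (HH x)"
  unfolding symm_def
proof (intro ballI)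
  fix I J assume x: "x \<in> Sg" and IJ: "I \<in> S" "J \<in> S"
  show "HH x I J = HH x J I"
  proof (rule eps_eq)
    fix e :: real assume e: "e > 0"
    obtain n where n: "\<forall>y\<in>{x}. \<forall>I\<in>S. \<forall>J\<in>S. \<bar>hh (Suc n) y I J - HH y I J\<bar> < e/2"
      using approx[of "{x}" "e/2" 0] x e by auto
    have h: "hh (Suc n) x I J = hh (Suc n) x J I" using cone_hh x IJ by (auto simp: cone_def symm_def)
    have a: "\<bar>hh (Suc n) x I J - HH x I J\<bar> < e/2" "\<bar>hh (Suc n) x J I - HH x J I\<bar> < e/2" using n IJ by auto
    have "HH x I J - HH x J I = (hh (Suc n) x J I - HH x J I) - (hh (Suc n) x I J - HH x I J)" using h by simp
    hence "\<bar>HH x I J - HH x J I\<bar> \<le> \<bar>hh (Suc n) x J I - HH x J I\<bar> + \<bar>hh (Suc n) x I J - HH x I J\<bar>"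
      by (metis abs_triangle_ineq4)
    thus "\<bar>HH x I J - HH x J I\<bar> \<le> e" using a by linarith
  qed
qed

lemma HH_psd: "x \<in> Sg \<Longrightarrow> 0 \<le> Qf S (HH x) c"
proof (rule field_le_epsilon)
  fix e :: real assume x: "x \<in> Sg" and e: "0 < e"
  define s2 where "s2 = (\<Sum>I\<in>S. \<bar>c I\<bar>)^2"
  have s2: "0 \<le> s2" by (simp add: s2_def)
  obtain n where n: "\<forall>y\<in>{x}. \<forall>I\<in>S. \<forall>J\<in>S. \<bar>hh (Suc n) y I J - HH y I J\<bar> < e / (s2 + 1)"
    using approx[of "{x}" "e / (s2 + 1)" 0] x e s2 by auto
  have "\<bar>Qf S (hh (Suc n) x) c - Qf S (HH x) c\<bar> \<le> e / (s2 + 1) * s2"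
    using approxQ[OF n] by (simp add: s2_def)
  also have "\<dots> \<le> e" using e s2 by (simp add: field_simps)
  finally have "\<bar>Qf S (hh (Suc n) x) c - Qf S (HH x) c\<bar> \<le> e" .
  moreover have "0 \<le> Qf S (hh (Suc n) x) c" using cone_hh x by (auto simp: cone_def psd_def)
  ultimately show "0 \<le> Qf S (HH x) c + e" by linarith
qed

lemma HH_ineq:
  assumes x: "x \<in> Sg" and y: "y \<in> Sg"
  shows "Qf S (HH x) c \<le> exp (Kc * dgam \<gamma> x y powr \<alpha>) * Qf S (HH y) c"
proof (rule field_le_epsilon)
  fix e :: real assume e: "0 < e"
  define E where "E = exp (Kc * dgam \<gamma> x y powr \<alpha>)"
  define s2 where "s2 = (\<Sum>I\<in>S. \<bar>c I\<bar>)^2"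
  have s2: "0 \<le> s2" by (simp add: s2_def)
  define e' where "e' = e / ((E + 1) * (s2 + 1))"
  have e': "e' > 0" using e s2 by (simp add: e'_def E_def add_pos_nonneg)
  obtain n where n: "\<forall>z\<in>{x,y}. \<forall>I\<in>S. \<forall>J\<in>S. \<bar>hh (Suc n) z I J - HH z I J\<bar> < e'"
    using approx[of "{x,y}" e' 0] x y e' by auto
  have dx: "\<bar>Qf S (hh (Suc n) x) c - Qf S (HH x) c\<bar> \<le> e' * s2" using approxQ[OF n] by (simp add: s2_def)
  have dy: "\<bar>Qf S (hh (Suc n) y) c - Qf S (HH y) c\<bar> \<le> e' * s2" using approxQ[OF n] by (simp add: s2_def)
  have ch: "Qf S (hh (Suc n) x) c \<le> E * Qf S (hh (Suc n) y) c" using cone_hh x y by (simp add: cone_def E_def)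
  have E0: "0 < E" by (simp add: E_def)
  have "E * Qf S (hh (Suc n) y) c \<le> E * (Qf S (HH y) c + e' * s2)"
    using dy E0 by (intro mult_left_mono) (auto simp: abs_le_iff)
  hence "Qf S (HH x) c \<le> E * Qf S (HH y) c + (E + 1) * (e' * s2)"
    using dx ch by (simp add: abs_le_iff algebra_simps)
  also have "(E + 1) * (e' * s2) \<le> e"
  proof -
    have p: "(E + 1) * (s2 + 1) > 0" using E0 s2 by (simp add: add_pos_nonneg)
    have pn: "E + 1 \<noteq> 0" "s2 + 1 \<noteq> 0" using E0 s2 by auto
    have ee: "e' * ((E + 1) * (s2 + 1)) = e" using pn by (simp add: e'_def)
    have "(E + 1) * (e' * s2) \<le> (E + 1) * (e' * (s2 + 1))" using E0 e' by (intro mult_left_mono) auto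
    also have "\<dots> = e" using ee by (simp add: mult_ac)
    finally show ?thesis .
  qed
  finally show "Qf S (HH x) c \<le> exp (Kc * dgam \<gamma> x y powr \<alpha>) * Qf S (HH y) c + e"
    by (simp add: E_def)
qed

lemma cone_HH: "cone HH"
  unfolding cone_def using HH_symm HH_psd HH_ineq by (auto simp: psd_def)

lemma HH_eigQ:
  assumes x: "x \<in> Sg"
  shows "Qf S (R W HH x) c = lam * Qf S (HH x) c"
proof (rule eps_eq)
  fix e :: real assume e: "e > 0"
  define s2 where "s2 = (\<Sum>I\<in>S. \<bar>c I\<bar>)^2"
  have s2: "0 \<le> s2" by (simp add: s2_def)
  define M1 where "M1 = (\<Sum>i<t. exp (W (scons i x)) * (\<Sum>I\<in>S. \<bar>pb i c I\<bar>)^2)"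
  have M1: "0 \<le> M1" unfolding M1_def by (intro sum_nonneg) auto
  define e' where "e' = e / (2 * (M1 + lam * s2 + 1))"
  have den: "0 < M1 + lam * s2 + 1" using M1 s2 lam_pos by (simp add: add_nonneg_pos)
  have e': "e' > 0" using e den by (simp add: e'_def)
  obtain N0 :: nat where N0: "2 * Dc * nsq S c / e < real N0" using reals_Archimedean2 by blast
  define X where "X = insert x ((\<lambda>i. scons i x) ` {..<t})"
  have X: "finite X" "X \<subseteq> Sg" using x scons_Sigma by (auto simp: X_def)
  obtain n where n: "n \<ge> N0" "\<forall>z\<in>X. \<forall>I\<in>S. \<forall>J\<in>S. \<bar>hh (Suc n) z I J - HH z I J\<bar> < e'"
    using approx[OF X e', of N0] by blast
  have xX: "x \<in> X" and iX: "i < t \<Longrightarrow> scons i x \<in> X" for i by (auto simp: X_def)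
  have d1: "\<bar>Qf S (R W HH x) c - Qf S (R W (hh (Suc n)) x) c\<bar> \<le> e' * M1"
  proof -
    have "\<bar>Qf S (R W HH x) c - Qf S (R W (hh (Suc n)) x) c\<bar> =
      \<bar>\<Sum>i<t. exp (W (scons i x)) * (Qf S (HH (scons i x)) (pb i c) - Qf S (hh (Suc n) (scons i x)) (pb i c))\<bar>"
      by (simp add: ruelle_Qf sum_subtractf[symmetric] right_diff_distrib)
    also have "\<dots> \<le> (\<Sum>i<t. \<bar>exp (W (scons i x)) * (Qf S (HH (scons i x)) (pb i c) - Qf S (hh (Suc n) (scons i x)) (pb i c))\<bar>)"
      by (rule sum_abs)
    also have "\<dots> \<le> (\<Sum>i<t. exp (W (scons i x)) * (e' * (\<Sum>I\<in>S. \<bar>pb i c I\<bar>)^2))"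
    proof (intro sum_mono)
      fix i assume "i \<in> {..<t}"
      hence "\<bar>Qf S (hh (Suc n) (scons i x)) (pb i c) - Qf S (HH (scons i x)) (pb i c)\<bar> \<le> e' * (\<Sum>I\<in>S. \<bar>pb i c I\<bar>)^2"
        using approxQ[OF n(2) iX] by auto
      thus "\<bar>exp (W (scons i x)) * (Qf S (HH (scons i x)) (pb i c) - Qf S (hh (Suc n) (scons i x)) (pb i c))\<bar>
          \<le> exp (W (scons i x)) * (e' * (\<Sum>I\<in>S. \<bar>pb i c I\<bar>)^2)"
        by (simp add: abs_mult abs_minus_commute mult_left_mono)
    qed
    also have "\<dots> = e' * M1" by (simp add: M1_def sum_distrib_left mult_ac)
    finally show ?thesis .
  qed
  have d2: "\<bar>Qf S (R W (hh (Suc n)) x) c - lam * Qf S (hh (Suc n) x) c\<bar> \<le> Dc / real (Suc n) * nsq S c"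
    by (rule defect[OF x]) simp
  have d2': "Dc / real (Suc n) * nsq S c \<le> e / 2"
  proof (cases "Dc * nsq S c = 0")
    case True
    have "Dc = 0 \<or> nsq S c = 0" using True by simp
    thus ?thesis using e by auto
  next
    case False
    hence pos: "0 < Dc * nsq S c" using Dc_nonneg nsq_nonneg[of S c] by (simp add: less_le)
    have "2 * Dc * nsq S c / e < real (Suc n)" using N0 n(1) by linarith
    hence "2 * Dc * nsq S c < e * real (Suc n)" using e by (simp add: field_simps)
    thus ?thesis using e by (simp add: field_simps)
  qed
  have d3: "\<bar>lam * Qf S (hh (Suc n) x) c - lam * Qf S (HH x) c\<bar> \<le> lam * (e' * s2)"
  proof -
    have "\<bar>lam * Qf S (hh (Suc n) x) c - lam * Qf S (HH x) c\<bar> = lam * \<bar>Qf S (hh (Suc n) x) c - Qf S (HH x) c\<bar>"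
      using lam_pos by (simp add: abs_mult right_diff_distrib[symmetric])
    also have "\<dots> \<le> lam * (e' * s2)" using approxQ[OF n(2) xX] lam_pos by (intro mult_left_mono) (auto simp: s2_def)
    finally show ?thesis .
  qed
  have "e' * M1 + lam * (e' * s2) \<le> e / 2"
  proof -
    have "e' * M1 + lam * (e' * s2) = e' * (M1 + lam * s2)" by (simp add: algebra_simps)
    also have "\<dots> \<le> e' * (M1 + lam * s2 + 1)" using e' by simp
    also have "\<dots> = e / 2"
    proof -
      have "M1 + lam * s2 + 1 \<noteq> 0" using den by simp
      thus ?thesis unfolding e'_def by (simp add: divide_simps)
    qed
    finally show ?thesis .
  qed
  thus "\<bar>Qf S (R W HH x) c - lam * Qf S (HH x) c\<bar> \<le> e" using d1 d2 d2' d3 by linarith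
qed

lemma HH_eig:
  assumes x: "x \<in> Sg" and K: "K \<in> S" "K' \<in> S"
  shows "R W HH x K K' = lam * HH x K K'"
proof -
  have s1: "symm S (R W HH x)" using HH_symm x scons_Sigma by (intro ruelle_symm) auto
  have s2: "symm S (\<lambda>I J. lam * HH x I J)" using HH_symm[OF x] by (simp add: symm_def)
  have "\<forall>c. Qf S (R W HH x) c = Qf S (\<lambda>I J. lam * HH x I J) c" using HH_eigQ[OF x] by (simp add: Qf_scale)
  from polarization[OF _ s1 s2 this K] show ?thesis by simp
qed

lemma HH_tr: "1 / (exp Kc * real (card S)) \<le> trq S (HH x0)"
proof (rule field_le_epsilon)
  fix e :: real assume e: "0 < e"
  define e' where "e' = e / (real (card S) + 1)"
  have e': "e' > 0" using e by (simp add: e'_def add_nonneg_pos)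
  obtain n where n: "\<forall>z\<in>{x0}. \<forall>I\<in>S. \<forall>J\<in>S. \<bar>hh (Suc n) z I J - HH z I J\<bar> < e'"
    using approx[of "{x0}" e' 0] x0S e' by auto
  have "trq S (hh (Suc n) x0) - trq S (HH x0) = (\<Sum>I\<in>S. hh (Suc n) x0 I I - HH x0 I I)"
    by (simp add: trq_def sum_subtractf)
  also have "\<dots> \<le> (\<Sum>I\<in>S. e')" using n by (intro sum_mono) (auto simp: abs_less_iff less_imp_le)
  also have "\<dots> = real (card S) * e'" by simp
  also have "\<dots> \<le> e" using e by (simp add: e'_def field_simps)
  finally have "trq S (hh (Suc n) x0) \<le> trq S (HH x0) + e" by simp
  moreover have "1 / (exp Kc * real (card S)) \<le> trq S (hh (Suc n) x0)" by (rule trq_hh_lower) simp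
  ultimately show "1 / (exp Kc * real (card S)) \<le> trq S (HH x0) + e" by linarith
qed

lemma HH_posdef: "x \<in> Sg \<Longrightarrow> posdef q (HH x)"
  unfolding posdef_Qf
proof (intro allI impI)
  fix c :: "'n set \<Rightarrow> real" assume x: "x \<in> Sg" and "\<exists>I\<in>S. c I \<noteq> 0"
  then obtain I where I: "I \<in> S" "c I \<noteq> 0" by blast
  have "0 < (c I)^2" using I by simp
  also have "(c I)^2 \<le> nsq S c" unfolding nsq_def using I by (intro member_le_sum) auto
  finally have np: "0 < nsq S c" .
  have tp: "0 < trq S (HH x0)" using HH_tr Npos by (smt (verit) divide_pos_pos exp_gt_zero mult_pos_pos)
  have "0 < c0 * trq S (HH x0) * nsq S c" using c0_pos tp np by simp
  also have "\<dots> \<le> Qf S (R W HH x) c" by (rule doeblin_R[OF cone_HH x])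
  also have "\<dots> = lam * Qf S (HH x) c" by (rule HH_eigQ[OF x])
  finally show "0 < Qf S (HH x) c" using lam_pos by (simp add: zero_less_mult_iff)
qed

lemma HH_contM: "contM t \<gamma> q HH"
  unfolding contM_def
proof (intro conjI ballI allI impI)
  fix x assume x: "x \<in> Sg"
  show "HH x \<in> Mq q" unfolding Mq_def using HH_symm[OF x] by (auto simp: symm_def HH_def)
next
  fix x and e :: real assume x: "x \<in> Sg" and e: "e > 0"
  obtain \<delta> where \<delta>: "\<delta> > 0" "\<forall>y\<in>Sg. dgam \<gamma> x y < \<delta> \<longrightarrow> (\<forall>I\<in>S. \<forall>J\<in>S. \<bar>HH y I J - HH x I J\<bar> < e)"
    using cone_cont[OF cone_HH x e] by blast
  show "\<exists>\<delta>>0. \<forall>y\<in>Sg. dgam \<gamma> x y < \<delta> \<longrightarrow> (\<forall>I J. \<bar>HH y I J - HH x I J\<bar> < e)"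
  proof (intro exI[of _ \<delta>] conjI \<delta>(1) ballI impI allI)
    fix y I J assume y: "y \<in> Sg" "dgam \<gamma> x y < \<delta>"
    show "\<bar>HH y I J - HH x I J\<bar> < e"
    proof (cases "I \<in> S \<and> J \<in> S")
      case True thus ?thesis using \<delta>(2) y by blast
    next
      case False thus ?thesis using e by (auto simp: HH_def)
    qed
  qed
qed

lemma exists_eig: "eigpair W lam HH"
  unfolding eigpair_def using lam_pos HH_contM HH_posdef HH_eig by auto

end


context sett begin

lemma betaW_eq:
  assumes e: "eigpair W \<beta> A"
  shows "betaW t \<gamma> \<psi> q W = \<beta>"
  unfolding betaW_def
proof (rule the_equality)
  show "\<beta> > 0 \<and> (\<exists>A::(nat \<Rightarrow> nat) \<Rightarrow> ('n set \<Rightarrow> 'n set \<Rightarrow> real).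
      contM t \<gamma> q A \<and> (\<forall>x\<in>Sigma_sp t. posdef q (A x)) \<and>
      (\<forall>x\<in>Sigma_sp t. \<forall>K\<in>qidx q. \<forall>K'\<in>qidx q. ruelle t \<psi> q W A x K K' = \<beta> * A x K K'))"
    using e unfolding eigpair_def by blast
next
  fix b assume "b > 0 \<and> (\<exists>A::(nat \<Rightarrow> nat) \<Rightarrow> ('n set \<Rightarrow> 'n set \<Rightarrow> real).
      contM t \<gamma> q A \<and> (\<forall>x\<in>Sigma_sp t. posdef q (A x)) \<and>
      (\<forall>x\<in>Sigma_sp t. \<forall>K\<in>qidx q. \<forall>K'\<in>qidx q. ruelle t \<psi> q W A x K K' = b * A x K K'))"
  then obtain A' where "eigpair W b A'" unfolding eigpair_def by blast
  from comparison[OF this e, of 0] comparison[OF e this, of 0] show "b = \<beta>" by simp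
qed

lemma hold_beta:
  assumes CW: "0 \<le> CW" and Wh: "\<forall>x\<in>Sigma_sp t. \<forall>y\<in>Sigma_sp t. \<bar>W x - W y\<bar> \<le> CW * dgam \<gamma> x y powr \<alpha>"
  shows "\<exists>A. eigpair W (betaW t \<gamma> \<psi> q W) A"
proof -
  interpret hold t \<gamma> \<alpha> \<psi> q W CW using CW Wh by unfold_locales auto
  show ?thesis using exists_eig betaW_eq[OF exists_eig] by auto
qed

lemma pressure_mono:
  assumes h1: "0 \<le> C1" "\<forall>x\<in>Sigma_sp t. \<forall>y\<in>Sigma_sp t. \<bar>W1 x - W1 y\<bar> \<le> C1 * dgam \<gamma> x y powr \<alpha>"
    and h2: "0 \<le> C2" "\<forall>x\<in>Sigma_sp t. \<forall>y\<in>Sigma_sp t. \<bar>W2 x - W2 y\<bar> \<le> C2 * dgam \<gamma> x y powr \<alpha>"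
    and W: "\<forall>x\<in>Sg. W1 x \<le> W2 x + \<delta>"
  shows "pressure t \<gamma> \<psi> q W1 \<le> pressure t \<gamma> \<psi> q W2 + \<delta>"
proof -
  obtain A1 where e1: "eigpair W1 (betaW t \<gamma> \<psi> q W1) A1" using hold_beta[OF h1] by blast
  obtain A2 where e2: "eigpair W2 (betaW t \<gamma> \<psi> q W2) A2" using hold_beta[OF h2] by blast
  have p: "betaW t \<gamma> \<psi> q W1 > 0" "betaW t \<gamma> \<psi> q W2 > 0" using e1 e2 by (auto simp: eigpair_def)
  have "betaW t \<gamma> \<psi> q W1 \<le> exp \<delta> * betaW t \<gamma> \<psi> q W2" by (rule comparison[OF e1 e2 W])
  hence "ln (betaW t \<gamma> \<psi> q W1) \<le> ln (exp \<delta> * betaW t \<gamma> \<psi> q W2)" using p by simp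
  also have "\<dots> = \<delta> + ln (betaW t \<gamma> \<psi> q W2)" using p by (simp add: ln_mult)
  finally show ?thesis by (simp add: pressure_def)
qed

end

theorem lemma4p1:
  fixes t q :: nat and \<gamma> \<alpha> :: real
    and \<psi> :: "nat \<Rightarrow> real^('n::{finite,linorder}) \<Rightarrow> real^('n::{finite,linorder})"
    and V :: "(nat \<Rightarrow> nat) \<Rightarrow> real"
  assumes gam: "0 < \<gamma>" "\<gamma> < 1"
    and alpha: "0 < \<alpha>" "\<alpha> \<le> 1"
    and affine: "\<forall>i<t. bij (\<psi> i) \<and> linear (\<lambda>x. \<psi> i x - \<psi> i 0)"
    and contr: "\<forall>i<t. \<exists>\<rho><1. \<forall>x y. dist (\<psi> i x) (\<psi> i y) \<le> \<rho> * dist x y"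
    and q: "1 \<le> q" "q \<le> CARD('n)"
    and NDq: "\<exists>\<gamma>'>0. \<forall>c e :: 'n::{finite,linorder} set \<Rightarrow> real. \<exists>i<t.
               \<bar>ipq q (pullback (Dlin (\<psi> i)) q c) e\<bar> \<ge> \<gamma>' * normq q c * normq q e"
    and Vh: "holder t \<gamma> \<alpha> V"
    and Vpos: "\<forall>x\<in>Sigma_sp t. V x > 0"
  shows "(\<exists>!c::real. pressure t \<gamma> \<psi> q (\<lambda>x. - c * V x) = 0) \<and>
         (\<forall>c::real. pressure t \<gamma> \<psi> q (\<lambda>x. - c * V x) = 0 \<longrightarrow>
             (pressure t \<gamma> \<psi> q (\<lambda>x. 0) > 0 \<longrightarrow> c > 0) \<and>
             (pressure t \<gamma> \<psi> q (\<lambda>x. 0) < 0 \<longrightarrow> c < 0))"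
proof -
  interpret sett t \<gamma> \<alpha> \<psi> q
    using gam alpha qidx_ne[OF q(2)] ND_conv[OF NDq] by unfold_locales auto
  obtain C0 where C0: "\<forall>x\<in>Sigma_sp t. \<forall>y\<in>Sigma_sp t. \<bar>V x - V y\<bar> \<le> C0 * dgam \<gamma> x y powr \<alpha>"
    using Vh unfolding holder_def by blast
  define CV where "CV = max C0 0"
  have CV: "0 \<le> CV" by (simp add: CV_def)
  have Vh': "\<forall>x\<in>Sigma_sp t. \<forall>y\<in>Sigma_sp t. \<bar>V x - V y\<bar> \<le> CV * dgam \<gamma> x y powr \<alpha>"
  proof (intro ballI)
    fix x y assume "x \<in> Sigma_sp t" "y \<in> Sigma_sp t"
    hence "\<bar>V x - V y\<bar> \<le> C0 * dgam \<gamma> x y powr \<alpha>" using C0 by blast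
    also have "\<dots> \<le> CV * dgam \<gamma> x y powr \<alpha>" by (intro mult_right_mono) (auto simp: CV_def)
    finally show "\<bar>V x - V y\<bar> \<le> CV * dgam \<gamma> x y powr \<alpha>" .
  qed
  have hc: "\<forall>x\<in>Sigma_sp t. \<forall>y\<in>Sigma_sp t. \<bar>(- c * V x) - (- c * V y)\<bar> \<le> (\<bar>c\<bar> * CV) * dgam \<gamma> x y powr \<alpha>" for c
  proof (intro ballI)
    fix x y assume xy: "x \<in> Sigma_sp t" "y \<in> Sigma_sp t"
    have "\<bar>(- c * V x) - (- c * V y)\<bar> = \<bar>c\<bar> * \<bar>V x - V y\<bar>" by (simp add: abs_mult[symmetric] algebra_simps)
    also have "\<dots> \<le> \<bar>c\<bar> * (CV * dgam \<gamma> x y powr \<alpha>)" using Vh' xy by (intro mult_left_mono) auto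
    finally show "\<bar>(- c * V x) - (- c * V y)\<bar> \<le> (\<bar>c\<bar> * CV) * dgam \<gamma> x y powr \<alpha>" by (simp add: mult_ac)
  qed
  have hcC: "0 \<le> \<bar>c\<bar> * CV" for c using CV by simp
  obtain vmin where vmin: "vmin > 0" "\<forall>y\<in>Sigma_sp t. vmin \<le> V y"
  proof -
    have "\<exists>\<epsilon>>0. \<forall>y\<in>Sigma_sp t. \<epsilon> \<le> V y"
    proof (rule koenig_unif[where Prop = "\<lambda>\<epsilon> y. \<epsilon> \<le> V y"])
      show "\<forall>x\<in>Sigma_sp t. \<exists>n \<epsilon>. \<epsilon> > 0 \<and> (\<forall>y\<in>Sigma_sp t. (\<forall>k<n. y k = x k) \<longrightarrow> \<epsilon> \<le> V y)"
      proof
        fix x assume x: "x \<in> Sigma_sp t"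
        have vx: "V x > 0" using Vpos x by blast
        have "0 < V x / (2 * (CV + 1))" using vx CV by simp
        then obtain n where n: "(\<gamma> powr \<alpha>)^n < V x / (2 * (CV + 1))"
          using real_arch_pow_inv gpow(2) by blast
        show "\<exists>n \<epsilon>. \<epsilon> > 0 \<and> (\<forall>y\<in>Sigma_sp t. (\<forall>k<n. y k = x k) \<longrightarrow> \<epsilon> \<le> V y)"
        proof (intro exI[of _ n] exI[of _ "V x / 2"] conjI ballI impI)
          show "V x / 2 > 0" using vx by simp
          fix y assume y: "y \<in> Sigma_sp t" "\<forall>k<n. y k = x k"
          have "dgam \<gamma> x y \<le> \<gamma>^n" using y(2) gam by (intro dgam_prefix) auto
          hence "dgam \<gamma> x y powr \<alpha> \<le> (\<gamma>^n) powr \<alpha>"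
            using alpha dgam_nonneg[OF gam(1)] by (intro powr_mono2) auto
          also have "(\<gamma>^n) powr \<alpha> = (\<gamma> powr \<alpha>)^n"
            using gam by (simp add: powr_realpow[symmetric] powr_powr powr_power mult.commute)
          finally have d: "dgam \<gamma> x y powr \<alpha> \<le> V x / (2 * (CV + 1))" using n by simp
          have "CV * dgam \<gamma> x y powr \<alpha> \<le> CV * (V x / (2 * (CV + 1)))" using d CV by (intro mult_left_mono) auto
          also have "\<dots> \<le> V x / 2" using CV vx by (simp add: field_simps)
          finally have "CV * dgam \<gamma> x y powr \<alpha> \<le> V x / 2" .
          moreover have "\<bar>V x - V y\<bar> \<le> CV * dgam \<gamma> x y powr \<alpha>" using Vh' x y by blast
          ultimately show "V x / 2 \<le> V y" by linarith
        qed
      qed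
    qed auto
    thus ?thesis using that by blast
  qed
  define vmax where "vmax = V x0 + CV"
  have vmax: "\<forall>y\<in>Sigma_sp t. V y \<le> vmax"
  proof
    fix y assume y: "y \<in> Sigma_sp t"
    have "\<bar>V x0 - V y\<bar> \<le> CV * dgam \<gamma> x0 y powr \<alpha>" using Vh' x0S y by blast
    also have "\<dots> \<le> CV" using CV dpow_le1[of x0 y] by (simp add: mult_left_le)
    finally show "V y \<le> vmax" by (simp add: vmax_def)
  qed
  have vmax0: "0 \<le> vmax" using vmax vmin x0S by force
  define p where "p c = pressure t \<gamma> \<psi> q (\<lambda>x. - c * V x)" for c
  have pmono: "c1 \<le> c2 \<Longrightarrow> p c2 \<le> p c1 + (- ((c2 - c1) * vmin))" for c1 c2
    unfolding p_def
  proof (rule pressure_mono[OF hcC hc hcC hc])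
    assume c: "c1 \<le> c2"
    show "\<forall>x\<in>Sg. - c2 * V x \<le> - c1 * V x + - ((c2 - c1) * vmin)"
    proof
      fix x assume "x \<in> Sg"
      hence "(c2 - c1) * vmin \<le> (c2 - c1) * V x" using vmin c by (intro mult_left_mono) auto
      thus "- c2 * V x \<le> - c1 * V x + - ((c2 - c1) * vmin)" by (simp add: algebra_simps)
    qed
  qed
  have plip: "p c1 \<le> p c2 + \<bar>c1 - c2\<bar> * vmax" for c1 c2
    unfolding p_def
  proof (rule pressure_mono[OF hcC hc hcC hc])
    show "\<forall>x\<in>Sg. - c1 * V x \<le> - c2 * V x + \<bar>c1 - c2\<bar> * vmax"
    proof
      fix x assume x: "x \<in> Sg"
      have "(c2 - c1) * V x \<le> \<bar>c1 - c2\<bar> * V x" using vmin x by (intro mult_right_mono) auto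
      also have "\<dots> \<le> \<bar>c1 - c2\<bar> * vmax" using vmax x by (intro mult_left_mono) auto
      finally show "- c1 * V x \<le> - c2 * V x + \<bar>c1 - c2\<bar> * vmax" by (simp add: algebra_simps)
    qed
  qed
  have pcont: "continuous_on A p" for A
  proof (rule lipschitz_on_continuous_on)
    show "vmax-lipschitz_on A p"
    proof (rule lipschitz_onI)
      fix x y
      show "dist (p x) (p y) \<le> vmax * dist x y"
        using plip[of x y] plip[of y x] by (simp add: dist_real_def abs_le_iff abs_minus_commute mult.commute)
    qed (rule vmax0)
  qed
  have p0: "pressure t \<gamma> \<psi> q (\<lambda>x. 0) = p 0" by (simp add: p_def)
  have ex: "\<exists>c. p c = 0"
  proof (cases "p 0 \<ge> 0")
    case True
    define b where "b = p 0 / vmin"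
    have b: "0 \<le> b" using True vmin by (simp add: b_def)
    have "p b \<le> p 0 + - ((b - 0) * vmin)" by (rule pmono[OF b])
    hence "p b \<le> 0" using vmin by (simp add: b_def)
    from IVT2'[of p b 0 0, OF this True b pcont] show ?thesis by blast
  next
    case False
    define b where "b = p 0 / vmin"
    have b: "b \<le> 0" using False vmin by (simp add: b_def divide_nonpos_pos)
    have "p 0 \<le> p b + - ((0 - b) * vmin)" by (rule pmono[OF b])
    hence "0 \<le> p b" using vmin by (simp add: b_def)
    from IVT2'[of p 0 0 b, OF _ this b pcont] False show ?thesis by force
  qed
  have uniq: "p c1 = 0 \<Longrightarrow> p c2 = 0 \<Longrightarrow> c1 = c2" for c1 c2
  proof (rule ccontr)
    assume h: "p c1 = 0" "p c2 = 0" "c1 \<noteq> c2"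
    show False
    proof (cases "c1 < c2")
      case True
      have "p c2 \<le> p c1 + - ((c2 - c1) * vmin)" using True by (intro pmono) auto
      moreover have "0 < (c2 - c1) * vmin" using True vmin by simp
      ultimately show False using h by simp
    next
      case False
      hence c: "c2 < c1" using h by simp
      have "p c1 \<le> p c2 + - ((c1 - c2) * vmin)" using c by (intro pmono) auto
      moreover have "0 < (c1 - c2) * vmin" using c vmin by simp
      ultimately show False using h by simp
    qed
  qed
  have signs: "p c = 0 \<Longrightarrow> (p 0 > 0 \<longrightarrow> c > 0) \<and> (p 0 < 0 \<longrightarrow> c < 0)" for c
  proof (intro conjI impI)
    assume h: "p c = 0" and "p 0 > 0"
    show "c > 0"
    proof (rule ccontr)
      assume "\<not> c > 0"
      hence "c \<le> 0" by simp
      hence "p 0 \<le> p c + - ((0 - c) * vmin)" by (rule pmono)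
      moreover have "0 \<le> (0 - c) * vmin" using \<open>c \<le> 0\<close> vmin by (simp add: mult_nonpos_nonneg)
      ultimately show False using h \<open>p 0 > 0\<close> by simp
    qed
  next
    assume h: "p c = 0" and "p 0 < 0"
    show "c < 0"
    proof (rule ccontr)
      assume "\<not> c < 0"
      hence "0 \<le> c" by simp
      hence "p c \<le> p 0 + - ((c - 0) * vmin)" by (rule pmono)
      moreover have "0 \<le> (c - 0) * vmin" using \<open>0 \<le> c\<close> vmin by simp
      ultimately show False using h \<open>p 0 < 0\<close> by simp
    qed
  qed
  show ?thesis
    unfolding p0[unfolded p_def] using ex uniq signs unfolding p_def by blast
qed


end
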